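(* Let $\Omega\subset\mathbb{R}^n$ be a bounded domain, $(d_1,d_2,f,\kappa)\in(0,\infty)^4$, and for $\ell\in\{1,2\}$ let $\gamma_\ell:\Omega\times\Omega\to[0,\infty)$ be measurable with $\int_\Omega\gamma_\ell(y,x)\,\mathrm{d}y=\int_\Omega\gamma_\ell(x,y)\,\mathrm{d}y\le\gamma_\infty<\infty$ for $x\in\Omega$, some $\gamma_\infty\ge1$. Then the semi-trivial steady state $(1,0)$ of $$\partial_t u=d_1\Gamma_{\gamma_1}u-uv^2+f(1-u),\qquad \partial_t v=d_2\Gamma_{\gamma_2}v+uv^2-(f+\kappa)v\quad\text{in }(0,\infty)\times\Omega$$ is locally asymptotically stable in $X^2$.
   Context: $X:=L_\infty(\Omega)$, $\Gamma_\gamma z(x):=\int_\Omega\gamma(x,y)(z(y)-z(x))\,\mathrm{d}y$. The system generates a (local) semiflow on $X^2$. *)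

theory Defs
  imports "HOL-Analysis.Analysis" "HOL-Probability.Essential_Supremum"
begin

definition linf :: "'a::euclidean_space set \<Rightarrow> ('a \<Rightarrow> real) \<Rightarrow> ereal" where
  "linf \<Omega> z = esssup (lebesgue_on \<Omega>) (\<lambda>x. ereal \<bar>z x\<bar>)"

text \<open>Membership in X = L-infinity(\<Omega>) (representatives).\<close>
definition inX :: "'a::euclidean_space set \<Rightarrow> ('a \<Rightarrow> real) \<Rightarrow> bool" where
  "inX \<Omega> z \<longleftrightarrow> z \<in> borel_measurable (lebesgue_on \<Omega>) \<and> linf \<Omega> z < \<infinity>"

definition Gam :: "'a::euclidean_space set \<Rightarrow> ('a \<Rightarrow> 'a \<Rightarrow> real) \<Rightarrow> ('a \<Rightarrow> real) \<Rightarrow> 'a \<Rightarrow> real" where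
  "Gam \<Omega> \<gamma> z x = (LINT y|lebesgue_on \<Omega>. \<gamma> x y * (z y - z x))"

definition dist10 :: "'a::euclidean_space set \<Rightarrow> ('a \<Rightarrow> real) \<Rightarrow> ('a \<Rightarrow> real) \<Rightarrow> ereal" where
  "dist10 \<Omega> u v = linf \<Omega> (\<lambda>x. u x - 1) + linf \<Omega> v"

definition is_sol ::
  "'a::euclidean_space set \<Rightarrow> real \<Rightarrow> real \<Rightarrow> real \<Rightarrow> real \<Rightarrow>
   ('a \<Rightarrow> 'a \<Rightarrow> real) \<Rightarrow> ('a \<Rightarrow> 'a \<Rightarrow> real) \<Rightarrow> real set \<Rightarrow>
   (real \<Rightarrow> 'a \<Rightarrow> real) \<Rightarrow> (real \<Rightarrow> 'a \<Rightarrow> real) \<Rightarrow> bool" where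
  "is_sol \<Omega> d1 d2 f \<kappa> \<gamma>1 \<gamma>2 J U V \<longleftrightarrow>
     0 \<in> J \<and>
     (\<forall>t\<in>J. inX \<Omega> (U t) \<and> inX \<Omega> (V t)) \<and>
     (\<forall>t\<in>J. ((\<lambda>s. linf \<Omega> (\<lambda>x. (U s x - U t x) / (s - t)
                 - (d1 * Gam \<Omega> \<gamma>1 (U t) x - U t x * (V t x)\<^sup>2 + f * (1 - U t x))))
              \<longlongrightarrow> 0) (at t within J)) \<and>
     (\<forall>t\<in>J. ((\<lambda>s. linf \<Omega> (\<lambda>x. (V s x - V t x) / (s - t)
                 - (d2 * Gam \<Omega> \<gamma>2 (V t) x + U t x * (V t x)\<^sup>2 - (f + \<kappa>) * V t x)))
              \<longlongrightarrow> 0) (at t within J))"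

definition time_intervals :: "real set set" where
  "time_intervals = insert {0..} {{0..<T} | T. T > 0}"

end

theory Submission
  imports Defs "HOL-Probability.Discrete_Topology"
begin


lemma Gam_key:
  fixes \<Omega> :: "'a::euclidean_space set" and \<gamma> :: "'a \<Rightarrow> 'a \<Rightarrow> real"
  assumes gm: "(\<lambda>y. \<gamma> x y) \<in> borel_measurable (lebesgue_on \<Omega>)"
    and gnn: "\<And>y. y \<in> \<Omega> \<Longrightarrow> \<gamma> x y \<ge> 0"
    and gb: "(\<integral>\<^sup>+ y. ennreal (\<gamma> x y) \<partial>lebesgue_on \<Omega>) \<le> ennreal gi"
    and zm: "z \<in> borel_measurable (lebesgue_on \<Omega>)"
    and zb: "AE y in lebesgue_on \<Omega>. \<bar>z y\<bar> \<le> M"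
    and zx: "\<bar>z x\<bar> \<le> M"
    and gi0: "gi \<ge> 0"
    and h: "h \<ge> 0" "c \<ge> 0" "d \<ge> 0" "h*c + h*d*gi \<le> 1"
  shows "\<bar>(1 - h*c) * z x + h*d * Gam \<Omega> \<gamma> z x\<bar> \<le> (1 - h*c) * M"
proof -
  let ?L = "lebesgue_on \<Omega>"
  have nnAE: "AE y in ?L. \<gamma> x y \<ge> 0"
    by (rule AE_I2) (auto intro: gnn)
  have fin: "(\<integral>\<^sup>+ y. ennreal (norm (\<gamma> x y)) \<partial>?L) < \<infinity>"
  proof -
    have "(\<integral>\<^sup>+ y. ennreal (norm (\<gamma> x y)) \<partial>?L) = (\<integral>\<^sup>+ y. ennreal (\<gamma> x y) \<partial>?L)"
      by (rule nn_integral_cong_AE) (use nnAE in \<open>auto\<close>)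
    also have "\<dots> < \<infinity>" using gb by (simp add: le_less_trans)
    finally show ?thesis .
  qed
  have gint: "integrable ?L (\<lambda>y. \<gamma> x y)"
    by (rule integrableI_bounded[OF gm fin])
  define a where "a = (LINT y|?L. \<gamma> x y)"
  have a0: "a \<ge> 0" unfolding a_def by (rule integral_nonneg_AE[OF nnAE])
  have "ennreal a = (\<integral>\<^sup>+ y. ennreal (\<gamma> x y) \<partial>?L)"
    unfolding a_def by (rule nn_integral_eq_integral[OF gint nnAE, symmetric])
  with gb have "ennreal a \<le> ennreal gi" by simp
  then have agi: "a \<le> gi" using gi0 a0 by (simp add: ennreal_le_iff)
  have gzm: "(\<lambda>y. \<gamma> x y * z y) \<in> borel_measurable ?L" using gm zm by measurable
  have M0: "M \<ge> 0" using zx by linarith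
  have gzint: "integrable ?L (\<lambda>y. \<gamma> x y * z y)"
  proof (rule Bochner_Integration.integrable_bound[OF _ gzm])
    show "integrable ?L (\<lambda>y. M * \<gamma> x y)" using gint by simp
    show "AE y in ?L. norm (\<gamma> x y * z y) \<le> norm (M * \<gamma> x y)"
      using zb nnAE proof eventually_elim
      case (elim y)
      have "\<gamma> x y * \<bar>z y\<bar> \<le> \<gamma> x y * M" using elim by (simp add: mult_left_mono)
      then show ?case using M0 elim by (simp add: abs_mult mult.commute)
    qed
  qed
  define I where "I = (LINT y|?L. \<gamma> x y * z y)"
  have "\<bar>I\<bar> \<le> (LINT y|?L. \<bar>\<gamma> x y * z y\<bar>)" unfolding I_def by (rule integral_abs_bound)
  also have "\<dots> \<le> (LINT y|?L. M * \<gamma> x y)"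
  proof (rule integral_mono_AE)
    show "integrable ?L (\<lambda>y. \<bar>\<gamma> x y * z y\<bar>)" using gzint by simp
    show "integrable ?L (\<lambda>y. M * \<gamma> x y)" using gint by simp
    show "AE y in ?L. \<bar>\<gamma> x y * z y\<bar> \<le> M * \<gamma> x y"
      using zb nnAE proof eventually_elim
      case (elim y)
      have "\<gamma> x y * \<bar>z y\<bar> \<le> \<gamma> x y * M" using elim by (simp add: mult_left_mono)
      then show ?case using M0 elim by (simp add: abs_mult mult.commute)
    qed
  qed
  also have "\<dots> = M * a" unfolding a_def by simp
  finally have IB: "\<bar>I\<bar> \<le> M * a" .
  have "Gam \<Omega> \<gamma> z x = (LINT y|?L. \<gamma> x y * z y - z x * \<gamma> x y)"
    unfolding Gam_def by (simp add: algebra_simps)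
  also have "\<dots> = I - z x * a"
    unfolding I_def a_def using gzint gint by simp
  finally have G: "Gam \<Omega> \<gamma> z x = I - z x * a" .
  have e: "(1 - h*c) * z x + h*d * Gam \<Omega> \<gamma> z x = (1 - h*c - h*d*a) * z x + h*d * I"
    unfolding G by (simp add: algebra_simps)
  have hda: "h*d*a \<le> h*d*gi" using agi h by (simp add: mult_left_mono)
  have c1: "1 - h*c - h*d*a \<ge> 0" using hda h by linarith
  have hd0: "h*d \<ge> 0" using h by simp
  have "\<bar>(1 - h*c - h*d*a) * z x + h*d * I\<bar> \<le> (1 - h*c - h*d*a) * \<bar>z x\<bar> + h*d * \<bar>I\<bar>"
  proof -
    have "\<bar>(1 - h*c - h*d*a) * z x + h*d * I\<bar> \<le> \<bar>(1 - h*c - h*d*a) * z x\<bar> + \<bar>h*d * I\<bar>"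
      by (rule abs_triangle_ineq)
    also have "\<dots> = (1 - h*c - h*d*a) * \<bar>z x\<bar> + h*d * \<bar>I\<bar>"
    proof -
      have "\<bar>h*d * I\<bar> = h*d*\<bar>I\<bar>" by (metis abs_mult abs_of_nonneg hd0)
      moreover have "\<bar>(1 - h*c - h*d*a) * z x\<bar> = (1 - h*c - h*d*a) * \<bar>z x\<bar>"
        by (metis abs_mult abs_of_nonneg c1)
      ultimately show ?thesis by simp
    qed
    finally show ?thesis .
  qed
  also have "\<dots> \<le> (1 - h*c - h*d*a) * M + h*d * (M * a)"
    by (intro add_mono mult_left_mono zx IB c1 hd0)
  also have "\<dots> = (1 - h*c) * M" by (simp add: algebra_simps)
  finally show ?thesis using e by simp
qed



lemma dini_decay:
  fixes \<phi> :: "real \<Rightarrow> real" and J :: "real set"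
  assumes J0: "0 \<in> J" and Jpos: "\<And>t. t \<in> J \<Longrightarrow> 0 \<le> t"
    and Jdown: "\<And>s t. t \<in> J \<Longrightarrow> 0 \<le> s \<Longrightarrow> s \<le> t \<Longrightarrow> s \<in> J"
    and cont: "continuous_on J \<phi>"
    and step: "\<And>t \<epsilon>. t \<in> J \<Longrightarrow> \<phi> t < \<rho> \<Longrightarrow> \<epsilon> > 0 \<Longrightarrow>
        \<exists>\<delta>>0. \<forall>s\<in>J. t < s \<and> s < t + \<delta> \<longrightarrow> \<phi> s \<le> \<phi> t - (s - t) * \<alpha> * \<phi> t + (s - t) * \<epsilon>"
    and ab: "0 < \<beta>" "\<beta> < \<alpha>"
    and C: "0 < C" "C < \<rho>" "\<phi> 0 \<le> C"
  shows "\<forall>t\<in>J. \<phi> t \<le> C * exp (- \<beta> * t)"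
proof (rule ccontr)
  define g where "g t = C * exp (- \<beta> * t)" for t
  have gpos: "g t > 0" for t unfolding g_def using C by simp
  have gC: "g t \<le> C" if "t \<ge> 0" for t unfolding g_def using C that ab by simp
  have gcont: "continuous_on J g" unfolding g_def by (intro continuous_intros)
  assume "\<not> (\<forall>t\<in>J. \<phi> t \<le> C * exp (- \<beta> * t))"
  then obtain t1 where t1: "t1 \<in> J" "\<phi> t1 > g t1" unfolding g_def by force
  define S where "S = {t. 0 \<le> t \<and> t \<le> t1 \<and> (\<forall>s. 0 \<le> s \<and> s \<le> t \<longrightarrow> \<phi> s \<le> g s)}"
  have "0 \<in> S" unfolding S_def using C Jpos[OF t1(1)] by (auto simp: g_def)
  have bdd: "bdd_above S" unfolding S_def by (auto intro: bdd_aboveI[of _ t1])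
  define m where "m = Sup S"
  have m0: "0 \<le> m" unfolding m_def using cSup_upper[OF \<open>0 \<in> S\<close> bdd] .
  have mt1: "m \<le> t1" unfolding m_def using \<open>0 \<in> S\<close> by (intro cSup_least) (auto simp: S_def)
  have mJ: "m \<in> J" using Jdown[OF t1(1) m0 mt1] .
  have A: "\<phi> s \<le> g s" if "0 \<le> s" "s < m" for s
  proof -
    have "S \<noteq> {}" using \<open>0 \<in> S\<close> by auto
    then obtain t where "t \<in> S" "s < t" using \<open>s < m\<close> bdd unfolding m_def
      using less_cSup_iff by blast
    then show ?thesis using that unfolding S_def by auto
  qed
  have B: "\<phi> m \<le> g m"
  proof (cases "m = 0")
    case True then show ?thesis using C by (simp add: g_def)
  next
    case False
    then have mpos: "m > 0" using m0 by simp
    show ?thesis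
    proof (rule ccontr)
      assume "\<not> \<phi> m \<le> g m"
      then have e: "\<phi> m - g m > 0" by simp
      have "continuous_on J (\<lambda>t. \<phi> t - g t)" using cont gcont by (intro continuous_intros)
      then obtain d where d: "d > 0" "\<And>s. s \<in> J \<Longrightarrow> dist s m < d \<Longrightarrow>
          dist (\<phi> s - g s) (\<phi> m - g m) < \<phi> m - g m"
        using mJ e unfolding continuous_on_iff by metis
      define s where "s = max 0 (m - d/2)"
      have s: "0 \<le> s" "s < m" "dist s m < d" using d mpos unfolding s_def dist_real_def by auto
      have "s \<in> J" using Jdown[OF mJ s(1)] s(2) by simp
      from d(2)[OF this s(3)] have "\<phi> s - g s > 0" by (simp add: dist_real_def)
      with A[OF s(1) s(2)] show False by simp
    qed
  qed
  have allm: "\<phi> s \<le> g s" if "0 \<le> s" "s \<le> m" for s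
    using A B that by (cases "s = m") auto
  have mlt: "m < t1" using mt1 allm[of t1] t1(2) m0 by (cases "m = t1") auto
  have "\<phi> m < \<rho>" using B gC[OF m0] C by simp
  define \<epsilon> where "\<epsilon> = (\<alpha> - \<beta>) * g m / 2"
  have epos: "\<epsilon> > 0" unfolding \<epsilon>_def using ab gpos[of m] by simp
  obtain \<delta> where \<delta>: "\<delta> > 0" "\<forall>s\<in>J. m < s \<and> s < m + \<delta> \<longrightarrow>
      \<phi> s \<le> \<phi> m - (s - m) * \<alpha> * \<phi> m + (s - m) * \<epsilon>"
    using step[OF mJ \<open>\<phi> m < \<rho>\<close> epos] by blast
  define \<delta>' where "\<delta>' = min \<delta> (min (t1 - m) (1/\<alpha>))"
  have d'pos: "\<delta>' > 0" unfolding \<delta>'_def using \<delta> mlt ab by auto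
  have right: "\<phi> s \<le> g s" if "m < s" "s < m + \<delta>'" for s
  proof -
    define h where "h = s - m"
    have h: "0 < h" "h < \<delta>" "h \<le> t1 - m" "h \<le> 1/\<alpha>" using that unfolding h_def \<delta>'_def by auto
    have sJ: "s \<in> J" using Jdown[OF t1(1)] that m0 h unfolding h_def by auto
    have ha: "h * \<alpha> \<le> 1" using h ab by (simp add: field_simps)
    have "\<phi> s \<le> \<phi> m - h * \<alpha> * \<phi> m + h * \<epsilon>" using \<delta>(2) sJ that h unfolding h_def by auto
    also have "\<dots> = (1 - h * \<alpha>) * \<phi> m + h * \<epsilon>" by (simp add: algebra_simps)
    also have "\<dots> \<le> (1 - h * \<alpha>) * g m + h * \<epsilon>"
      using B ha h(1) by (intro add_mono mult_left_mono) auto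
    also have "\<dots> = g m * (1 - h * \<beta>) - h * ((\<alpha> - \<beta>) * g m / 2)"
      unfolding \<epsilon>_def by (simp add: algebra_simps)
    also have "\<dots> \<le> g m * (1 - h * \<beta>)"
      using h ab gpos[of m] by simp
    also have "\<dots> \<le> g m * exp (- \<beta> * h)"
    proof -
      have "1 + (- \<beta> * h) \<le> exp (- \<beta> * h)" by (rule exp_ge_add_one_self)
      then show ?thesis using gpos[of m] by (intro mult_left_mono) (auto simp: algebra_simps)
    qed
    also have "\<dots> = g s" unfolding g_def h_def by (simp add: algebra_simps flip: exp_add)
    finally show ?thesis .
  qed
  have "\<delta>' \<le> t1 - m" unfolding \<delta>'_def by auto
  then have le: "m + \<delta>'/2 \<le> t1" using d'pos by auto
  have "\<phi> s \<le> g s" if "0 \<le> s" "s \<le> m + \<delta>'/2" for s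
  proof (cases "s \<le> m")
    case True then show ?thesis using allm that by auto
  next
    case False then show ?thesis using right[of s] that d'pos by auto
  qed
  then have "m + \<delta>'/2 \<in> S"
    unfolding S_def using m0 d'pos le by auto
  then have "m + \<delta>'/2 \<le> m" unfolding m_def using bdd by (rule cSup_upper)
  then show False using d'pos by simp
qed



definition nrm :: "'a::euclidean_space set \<Rightarrow> ('a \<Rightarrow> real) \<Rightarrow> real" where
  "nrm \<Omega> z = real_of_ereal (linf \<Omega> z)"

lemma sets_open_leb: "open (\<Omega>::'a::euclidean_space set) \<Longrightarrow> \<Omega> \<in> sets lebesgue"
  by simp

lemma space_leb_on: "open (\<Omega>::'a::euclidean_space set) \<Longrightarrow> space (lebesgue_on \<Omega>) = \<Omega>"
  by (simp add: space_restrict_space2)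

lemma leb_on_pos:
  assumes "open (\<Omega>::'a::euclidean_space set)" "\<Omega> \<noteq> {}"
  shows "emeasure (lebesgue_on \<Omega>) (space (lebesgue_on \<Omega>)) \<noteq> 0"
proof -
  have "emeasure lebesgue \<Omega> > 0" using assms
    by (metis borel_open gr_zeroI negligible_iff_null_sets null_setsI
      open_not_negligible sets_completionI_sets sets_lborel)
  then show ?thesis using assms by (simp add: space_leb_on emeasure_restrict_space)
qed

lemma linf_nonneg:
  assumes "emeasure (lebesgue_on \<Omega>) (space (lebesgue_on \<Omega>)) \<noteq> 0"
  shows "linf \<Omega> z \<ge> 0"
proof -
  have "esssup (lebesgue_on \<Omega>) (\<lambda>x. (0::ereal)) \<le> esssup (lebesgue_on \<Omega>) (\<lambda>x. ereal \<bar>z x\<bar>)"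
    by (rule esssup_mono) auto
  then show ?thesis using esssup_const[OF assms, where c="0::ereal"] unfolding linf_def by simp
qed

lemma linf_AE: "AE x in lebesgue_on \<Omega>. ereal \<bar>z x\<bar> \<le> linf \<Omega> z"
  unfolding linf_def by (rule esssup_AE)

lemma linf_AE_lt:
  assumes a: "linf \<Omega> z < ereal e" shows "AE x in lebesgue_on \<Omega>. \<bar>z x\<bar> < e"
  using linf_AE[where \<Omega>=\<Omega> and z=z]
proof eventually_elim
  case (elim x)
  from elim a have "ereal \<bar>z x\<bar> < ereal e" by (rule le_less_trans)
  then show ?case by simp
qed

lemma linf_le:
  assumes "z \<in> borel_measurable (lebesgue_on \<Omega>)" "AE x in lebesgue_on \<Omega>. \<bar>z x\<bar> \<le> c"
  shows "linf \<Omega> z \<le> ereal c"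
  unfolding linf_def using assms by (intro esssup_I) auto

lemma inX_nrm:
  assumes "inX \<Omega> z" "emeasure (lebesgue_on \<Omega>) (space (lebesgue_on \<Omega>)) \<noteq> 0"
  shows "linf \<Omega> z = ereal (nrm \<Omega> z)" "nrm \<Omega> z \<ge> 0"
    "AE x in lebesgue_on \<Omega>. \<bar>z x\<bar> \<le> nrm \<Omega> z"
proof -
  have a: "linf \<Omega> z < \<infinity>" using assms unfolding inX_def by simp
  have b: "linf \<Omega> z \<ge> 0" using linf_nonneg[OF assms(2)] .
  show e: "linf \<Omega> z = ereal (nrm \<Omega> z)" unfolding nrm_def using a b
    by (cases "linf \<Omega> z") auto
  show "nrm \<Omega> z \<ge> 0" unfolding nrm_def using b by (simp add: real_of_ereal_pos)
  show "AE x in lebesgue_on \<Omega>. \<bar>z x\<bar> \<le> nrm \<Omega> z"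
    using linf_AE[where \<Omega>=\<Omega> and z=z] unfolding e by simp
qed

lemma nrm_le:
  assumes "inX \<Omega> z" "emeasure (lebesgue_on \<Omega>) (space (lebesgue_on \<Omega>)) \<noteq> 0"
    "AE x in lebesgue_on \<Omega>. \<bar>z x\<bar> \<le> c"
  shows "nrm \<Omega> z \<le> c"
proof -
  have "linf \<Omega> z \<le> ereal c" using assms(1,3) unfolding inX_def by (intro linf_le) auto
  then show ?thesis using inX_nrm(1)[OF assms(1,2)] by simp
qed

lemma Gam_bound:
  fixes \<Omega> :: "'a::euclidean_space set" and \<gamma> :: "'a \<Rightarrow> 'a \<Rightarrow> real"
  assumes gm: "(\<lambda>y. \<gamma> x y) \<in> borel_measurable (lebesgue_on \<Omega>)"
    and gnn: "\<And>y. y \<in> \<Omega> \<Longrightarrow> \<gamma> x y \<ge> 0"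
    and gb: "(\<integral>\<^sup>+ y. ennreal (\<gamma> x y) \<partial>lebesgue_on \<Omega>) \<le> ennreal gi"
    and zm: "z \<in> borel_measurable (lebesgue_on \<Omega>)"
    and zb: "AE y in lebesgue_on \<Omega>. \<bar>z y\<bar> \<le> M"
    and zx: "\<bar>z x\<bar> \<le> M"
    and gi0: "gi > 0"
  shows "\<bar>Gam \<Omega> \<gamma> z x\<bar> \<le> 2 * gi * M"
proof -
  have "\<bar>(1 - (1/gi)*0) * z x + (1/gi)*1 * Gam \<Omega> \<gamma> z x\<bar> \<le> (1 - (1/gi)*0) * M"
    by (rule Gam_key[where \<gamma>=\<gamma> and x=x and \<Omega>=\<Omega> and gi=gi and z=z and M=M and h="1/gi" and c=0 and d=1])
      (use gm gnn gb zm zb zx gi0 in auto)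
  then have "\<bar>z x + Gam \<Omega> \<gamma> z x / gi\<bar> \<le> M" by simp
  then have "\<bar>Gam \<Omega> \<gamma> z x / gi\<bar> \<le> 2 * M" using zx by linarith
  moreover have "\<bar>Gam \<Omega> \<gamma> z x / gi\<bar> = \<bar>Gam \<Omega> \<gamma> z x\<bar> / gi" using gi0 by simp
  ultimately have "\<bar>Gam \<Omega> \<gamma> z x\<bar> / gi \<le> 2 * M" by metis
  then have "\<bar>Gam \<Omega> \<gamma> z x\<bar> \<le> 2 * M * gi" using gi0 by (simp add: pos_divide_le_eq)
  then show ?thesis by (simp add: algebra_simps)
qed



lemma abs3: fixes a b c d e :: real
  assumes "a \<ge> 0" "c \<ge> 0"
  shows "\<bar>a*b - c*d - e\<bar> \<le> a*\<bar>b\<bar> + c*\<bar>d\<bar> + \<bar>e\<bar>" "\<bar>a*b - c*d + e\<bar> \<le> a*\<bar>b\<bar> + c*\<bar>d\<bar> + \<bar>e\<bar>"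
proof -
  have "\<bar>a*b\<bar> = a*\<bar>b\<bar>" "\<bar>c*d\<bar> = c*\<bar>d\<bar>" using assms by (simp_all add: abs_mult)
  then show "\<bar>a*b - c*d - e\<bar> \<le> a*\<bar>b\<bar> + c*\<bar>d\<bar> + \<bar>e\<bar>" "\<bar>a*b - c*d + e\<bar> \<le> a*\<bar>b\<bar> + c*\<bar>d\<bar> + \<bar>e\<bar>"
    by linarith+
qed

lemma abs_tri3: fixes A h n D :: real assumes "h \<ge> 0"
  shows "\<bar>A - h*n + h*D\<bar> \<le> \<bar>A\<bar> + h*\<bar>n\<bar> + h*\<bar>D\<bar>" "\<bar>A + h*n + h*D\<bar> \<le> \<bar>A\<bar> + h*\<bar>n\<bar> + h*\<bar>D\<bar>"
proof -
  have "\<bar>h*n\<bar> = h*\<bar>n\<bar>" "\<bar>h*D\<bar> = h*\<bar>D\<bar>" using assms by (simp_all add: abs_mult)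
  then show "\<bar>A - h*n + h*D\<bar> \<le> \<bar>A\<bar> + h*\<bar>n\<bar> + h*\<bar>D\<bar>" "\<bar>A + h*n + h*D\<bar> \<le> \<bar>A\<bar> + h*\<bar>n\<bar> + h*\<bar>D\<bar>"
    by linarith+
qed

lemma lip_cont:
  fixes g :: "real \<Rightarrow> real"
  assumes "eventually (\<lambda>s. \<bar>g s - g t\<bar> \<le> \<bar>s - t\<bar> * K) (at t within S)"
  shows "continuous (at t within S) g"
proof -
  have l0: "((\<lambda>s. \<bar>s - t\<bar> * K) \<longlongrightarrow> \<bar>t - t\<bar> * K) (at t within S)"
    by (intro tendsto_intros)
  then have l0': "((\<lambda>s. \<bar>s - t\<bar> * K) \<longlongrightarrow> 0) (at t within S)" by simp
  have l: "((\<lambda>s. g t - \<bar>s - t\<bar> * K) \<longlongrightarrow> g t - 0) (at t within S)"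
    by (intro tendsto_intros l0')
  have u: "((\<lambda>s. g t + \<bar>s - t\<bar> * K) \<longlongrightarrow> g t + 0) (at t within S)"
    by (intro tendsto_intros l0')
  have "(g \<longlongrightarrow> g t) (at t within S)"
  proof (rule tendsto_sandwich[OF _ _ l[simplified] u[simplified]])
    show "eventually (\<lambda>s. g t - \<bar>s - t\<bar> * K \<le> g s) (at t within S)"
      using assms by eventually_elim linarith
    show "eventually (\<lambda>s. g s \<le> g t + \<bar>s - t\<bar> * K) (at t within S)"
      using assms by eventually_elim linarith
  qed
  then show ?thesis unfolding continuous_within .
qed

lemma stab_generic:
  fixes \<Omega> :: "'a::euclidean_space set" and \<gamma>1 \<gamma>2 :: "'a \<Rightarrow> 'a \<Rightarrow> real"
    and W V R1 R2 n1 n2 :: "real \<Rightarrow> 'a \<Rightarrow> real" and J :: "real set"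
  assumes dom: "open \<Omega>" "\<Omega> \<noteq> {}"
    and pos: "d1 > 0" "d2 > 0" "f > 0" "\<kappa> > 0" and gi: "gi \<ge> 1"
    and good: "AE x in lebesgue_on \<Omega>. (\<lambda>y. \<gamma>1 x y) \<in> borel_measurable (lebesgue_on \<Omega>) \<and>
                  (\<lambda>y. \<gamma>2 x y) \<in> borel_measurable (lebesgue_on \<Omega>)"
    and gnn: "\<And>\<gamma> x y. \<gamma> \<in> {\<gamma>1, \<gamma>2} \<Longrightarrow> x \<in> \<Omega> \<Longrightarrow> y \<in> \<Omega> \<Longrightarrow> \<gamma> x y \<ge> 0"
    and gbnd: "\<And>\<gamma> x. \<gamma> \<in> {\<gamma>1, \<gamma>2} \<Longrightarrow> x \<in> \<Omega> \<Longrightarrow>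
                 (\<integral>\<^sup>+ y. ennreal (\<gamma> x y) \<partial>lebesgue_on \<Omega>) \<le> ennreal gi"
    and J0: "0 \<in> J" and Jpos: "\<And>t. t \<in> J \<Longrightarrow> 0 \<le> t"
    and Jdown: "\<And>s t. t \<in> J \<Longrightarrow> 0 \<le> s \<Longrightarrow> s \<le> t \<Longrightarrow> s \<in> J"
    and X: "\<And>t. t \<in> J \<Longrightarrow> inX \<Omega> (W t) \<and> inX \<Omega> (V t)"
    and D1: "\<And>t. t \<in> J \<Longrightarrow> ((\<lambda>s. linf \<Omega> (\<lambda>x. (W s x - W t x) / (s - t) - R1 t x)) \<longlongrightarrow> 0) (at t within J)"
    and D2: "\<And>t. t \<in> J \<Longrightarrow> ((\<lambda>s. linf \<Omega> (\<lambda>x. (V s x - V t x) / (s - t) - R2 t x)) \<longlongrightarrow> 0) (at t within J)"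
    and E1: "\<And>t. t \<in> J \<Longrightarrow> AE x in lebesgue_on \<Omega>. R1 t x = d1 * Gam \<Omega> \<gamma>1 (W t) x - f * W t x - n1 t x"
    and E2: "\<And>t. t \<in> J \<Longrightarrow> AE x in lebesgue_on \<Omega>. R2 t x = d2 * Gam \<Omega> \<gamma>2 (V t) x - (f + \<kappa>) * V t x + n2 t x"
    and N: "\<And>t. t \<in> J \<Longrightarrow> AE x in lebesgue_on \<Omega>. \<bar>n1 t x\<bar> \<le> (1 + \<bar>W t x\<bar>) * (V t x)\<^sup>2 \<and>
                 \<bar>n2 t x\<bar> \<le> (1 + \<bar>W t x\<bar>) * (V t x)\<^sup>2"
    and C: "0 < C" "C < min 1 (f/8)" "nrm \<Omega> (W 0) + nrm \<Omega> (V 0) \<le> C"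
  shows "\<forall>t\<in>J. nrm \<Omega> (W t) + nrm \<Omega> (V t) \<le> C * exp (- (f/4) * t)"
proof -
  let ?L = "lebesgue_on \<Omega>"
  define p where "p t = nrm \<Omega> (W t)" for t
  define q where "q t = nrm \<Omega> (V t)" for t
  have pos0: "emeasure ?L (space ?L) \<noteq> 0" by (rule leb_on_pos[OF dom])
  have sp: "space ?L = \<Omega>" by (rule space_leb_on[OF dom(1)])
  have inO: "AE x in ?L. x \<in> \<Omega>" using sp by (metis AE_space)
  have gi0: "gi > 0" using gi by simp
  have Wm: "W t \<in> borel_measurable ?L" if "t \<in> J" for t using X[OF that] unfolding inX_def by simp
  have Vm: "V t \<in> borel_measurable ?L" if "t \<in> J" for t using X[OF that] unfolding inX_def by simp
  have p0: "p t \<ge> 0" and pAE: "AE x in ?L. \<bar>W t x\<bar> \<le> p t" if "t \<in> J" for t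
    using inX_nrm[of \<Omega> "W t"] X[OF that] pos0 unfolding p_def by auto
  have q0: "q t \<ge> 0" and qAE: "AE x in ?L. \<bar>V t x\<bar> \<le> q t" if "t \<in> J" for t
    using inX_nrm[of \<Omega> "V t"] X[OF that] pos0 unfolding q_def by auto
  have pLe: "p t \<le> c" if "t \<in> J" "AE x in ?L. \<bar>W t x\<bar> \<le> c" for t c
    using nrm_le[of \<Omega> "W t" c] X[OF that(1)] pos0 that(2) unfolding p_def by auto
  have qLe: "q t \<le> c" if "t \<in> J" "AE x in ?L. \<bar>V t x\<bar> \<le> c" for t c
    using nrm_le[of \<Omega> "V t" c] X[OF that(1)] pos0 that(2) unfolding q_def by auto
  have g1m: "AE x in ?L. (\<lambda>y. \<gamma>1 x y) \<in> borel_measurable ?L" using good by (rule AE_mp) auto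
  have g2m: "AE x in ?L. (\<lambda>y. \<gamma>2 x y) \<in> borel_measurable ?L" using good by (rule AE_mp) auto
  have nlb: "(1 + \<bar>a\<bar>) * b\<^sup>2 \<le> (1 + P) * Q\<^sup>2" if "\<bar>a\<bar> \<le> P" "\<bar>b\<bar> \<le> Q" for a b P Q :: real
  proof -
    have "\<bar>b\<bar> \<le> \<bar>Q\<bar>" using that(2) by simp
    then have "b\<^sup>2 \<le> Q\<^sup>2" by (simp add: abs_le_square_iff)
    then show ?thesis using that(1) by (intro mult_mono) auto
  qed
  define K1 where "K1 t = 2 * gi * d1 * p t + f * p t + (1 + p t) * (q t)\<^sup>2" for t
  define K2 where "K2 t = 2 * gi * d2 * q t + (f + \<kappa>) * q t + (1 + p t) * (q t)\<^sup>2" for t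
  have R1b: "AE x in ?L. \<bar>R1 t x\<bar> \<le> K1 t" if t: "t \<in> J" for t
    using inO g1m pAE[OF t] qAE[OF t] E1[OF t] N[OF t]
  proof eventually_elim
    case (elim x)
    have G: "\<bar>Gam \<Omega> \<gamma>1 (W t) x\<bar> \<le> 2 * gi * p t"
      by (rule Gam_bound[where x=x and \<gamma>=\<gamma>1 and \<Omega>=\<Omega> and gi=gi and z="W t" and M="p t"])
         (use elim(2) gnn gbnd elim(1) Wm[OF t] pAE[OF t] elim(3) gi0 in auto)
    have n: "\<bar>n1 t x\<bar> \<le> (1 + p t) * (q t)\<^sup>2" using elim(6) nlb[OF elim(3) elim(4)] by linarith
    have "\<bar>R1 t x\<bar> \<le> d1 * \<bar>Gam \<Omega> \<gamma>1 (W t) x\<bar> + f * \<bar>W t x\<bar> + \<bar>n1 t x\<bar>"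
      unfolding elim(5) using pos by (intro abs3) auto
    also have "\<dots> \<le> d1 * (2 * gi * p t) + f * p t + (1 + p t) * (q t)\<^sup>2"
      using G n elim(3) pos by (intro add_mono mult_left_mono) auto
    finally show ?case unfolding K1_def by (simp add: algebra_simps)
  qed
  have R2b: "AE x in ?L. \<bar>R2 t x\<bar> \<le> K2 t" if t: "t \<in> J" for t
    using inO g2m pAE[OF t] qAE[OF t] E2[OF t] N[OF t]
  proof eventually_elim
    case (elim x)
    have G: "\<bar>Gam \<Omega> \<gamma>2 (V t) x\<bar> \<le> 2 * gi * q t"
      by (rule Gam_bound[where x=x and \<gamma>=\<gamma>2 and \<Omega>=\<Omega> and gi=gi and z="V t" and M="q t"])
         (use elim(2) gnn gbnd elim(1) Vm[OF t] qAE[OF t] elim(4) gi0 in auto)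
    have n: "\<bar>n2 t x\<bar> \<le> (1 + p t) * (q t)\<^sup>2" using elim(6) nlb[OF elim(3) elim(4)] by linarith
    have "\<bar>R2 t x\<bar> \<le> d2 * \<bar>Gam \<Omega> \<gamma>2 (V t) x\<bar> + (f + \<kappa>) * \<bar>V t x\<bar> + \<bar>n2 t x\<bar>"
      unfolding elim(5) using pos by (intro abs3) auto
    also have "\<dots> \<le> d2 * (2 * gi * q t) + (f + \<kappa>) * q t + (1 + p t) * (q t)\<^sup>2"
      using G n elim(4) pos by (intro add_mono mult_left_mono) auto
    finally show ?case unfolding K2_def by (simp add: algebra_simps)
  qed
  have ev_ne: "eventually (\<lambda>s. s \<in> J \<and> s \<noteq> t) (at t within J)" for t
    by (simp add: eventually_at_filter)
  have cont_p: "continuous (at t within J) p" if t: "t \<in> J" for t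
  proof (rule lip_cont)
    have ev: "eventually (\<lambda>s. linf \<Omega> (\<lambda>x. (W s x - W t x) / (s - t) - R1 t x) < ereal 1) (at t within J)"
      using D1[OF t] by (rule order_tendstoD) simp
    show "eventually (\<lambda>s. \<bar>p s - p t\<bar> \<le> \<bar>s - t\<bar> * (K1 t + 1)) (at t within J)"
      using ev ev_ne[of t]
    proof eventually_elim
      case (elim s)
      then have s: "s \<in> J" "s \<noteq> t" by auto
      have A: "AE x in ?L. \<bar>W s x - W t x\<bar> \<le> \<bar>s - t\<bar> * (K1 t + 1)"
        using linf_AE_lt[OF elim(1)] R1b[OF t]
      proof eventually_elim
        case (elim x)
        define D where "D = (W s x - W t x) / (s - t)"
        have "W s x - W t x = (s - t) * D"
          using s unfolding D_def by (simp add: field_simps)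
        also have "\<bar>\<dots>\<bar> = \<bar>s - t\<bar> * \<bar>D\<bar>"
          by (simp add: abs_mult)
        also have "\<dots> \<le> \<bar>s - t\<bar> * (K1 t + 1)"
        proof (rule mult_left_mono)
          show "\<bar>D\<bar> \<le> K1 t + 1" using elim abs_triangle_ineq[of "R1 t x" "D - R1 t x"]
            unfolding D_def[symmetric] by linarith
        qed simp
        finally show ?case .
      qed
      have "p s \<le> p t + \<bar>s - t\<bar> * (K1 t + 1)"
        using s(1) by (rule pLe) (use A pAE[OF t] in \<open>eventually_elim, linarith\<close>)
      moreover have "p t \<le> p s + \<bar>s - t\<bar> * (K1 t + 1)"
        using t by (rule pLe) (use A pAE[OF s(1)] in \<open>eventually_elim, linarith\<close>)
      ultimately show ?case by linarith
    qed
  qed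
  have cont_q: "continuous (at t within J) q" if t: "t \<in> J" for t
  proof (rule lip_cont)
    have ev: "eventually (\<lambda>s. linf \<Omega> (\<lambda>x. (V s x - V t x) / (s - t) - R2 t x) < ereal 1) (at t within J)"
      using D2[OF t] by (rule order_tendstoD) simp
    show "eventually (\<lambda>s. \<bar>q s - q t\<bar> \<le> \<bar>s - t\<bar> * (K2 t + 1)) (at t within J)"
      using ev ev_ne[of t]
    proof eventually_elim
      case (elim s)
      then have s: "s \<in> J" "s \<noteq> t" by auto
      have A: "AE x in ?L. \<bar>V s x - V t x\<bar> \<le> \<bar>s - t\<bar> * (K2 t + 1)"
        using linf_AE_lt[OF elim(1)] R2b[OF t]
      proof eventually_elim
        case (elim x)
        define D where "D = (V s x - V t x) / (s - t)"
        have "V s x - V t x = (s - t) * D"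
          using s unfolding D_def by (simp add: field_simps)
        also have "\<bar>\<dots>\<bar> = \<bar>s - t\<bar> * \<bar>D\<bar>"
          by (simp add: abs_mult)
        also have "\<dots> \<le> \<bar>s - t\<bar> * (K2 t + 1)"
        proof (rule mult_left_mono)
          show "\<bar>D\<bar> \<le> K2 t + 1" using elim abs_triangle_ineq[of "R2 t x" "D - R2 t x"]
            unfolding D_def[symmetric] by linarith
        qed simp
        finally show ?case .
      qed
      have "q s \<le> q t + \<bar>s - t\<bar> * (K2 t + 1)"
        using s(1) by (rule qLe) (use A qAE[OF t] in \<open>eventually_elim, linarith\<close>)
      moreover have "q t \<le> q s + \<bar>s - t\<bar> * (K2 t + 1)"
        using t by (rule qLe) (use A qAE[OF s(1)] in \<open>eventually_elim, linarith\<close>)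
      ultimately show ?case by linarith
    qed
  qed
  define \<phi> where "\<phi> t = p t + q t" for t
  have cont: "continuous_on J \<phi>" unfolding \<phi>_def continuous_on_eq_continuous_within
    using cont_p cont_q by (auto intro: continuous_add)
  define \<rho> where "\<rho> = min 1 (f/8)"
  define h0 where "h0 = 1 / (f + \<kappa> + (d1 + d2) * gi)"
  have h0pos: "h0 > 0" unfolding h0_def using pos gi0 by (simp add: add_pos_pos)
  have stepP: "p s \<le> (1 - (s - t) * f) * p t + (s - t) * ((1 + p t) * (q t)\<^sup>2) + (s - t) * e"
    if t: "t \<in> J" and s: "s \<in> J" "t < s" "s - t \<le> h0"
      and lt: "linf \<Omega> (\<lambda>x. (W s x - W t x) / (s - t) - R1 t x) < ereal e" for s t e
  proof (rule pLe[OF s(1)])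
    define h where "h = s - t"
    have h: "h > 0" "h * (f + \<kappa> + (d1 + d2) * gi) \<le> 1" using s h0pos pos gi0
      unfolding h_def h0_def by (auto simp: field_simps)
    have hc: "h * f + h * d1 * gi \<le> 1"
    proof -
      have "h * f + h * d1 * gi \<le> h * (f + \<kappa> + (d1 + d2) * gi)"
        using h pos gi0 by (simp add: algebra_simps)
      then show ?thesis using h by linarith
    qed
    show "AE x in ?L. \<bar>W s x\<bar> \<le> (1 - (s - t) * f) * p t + (s - t) * ((1 + p t) * (q t)\<^sup>2) + (s - t) * e"
      using linf_AE_lt[OF lt] inO g1m pAE[OF t] qAE[OF t] E1[OF t] N[OF t]
    proof eventually_elim
      case (elim x)
      define D where "D = (W s x - W t x) / (s - t) - R1 t x"
      have key: "\<bar>(1 - h*f) * W t x + h*d1 * Gam \<Omega> \<gamma>1 (W t) x\<bar> \<le> (1 - h*f) * p t"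
        by (rule Gam_key[where x=x and \<gamma>=\<gamma>1 and \<Omega>=\<Omega> and gi=gi and z="W t" and M="p t"])
           (use elim(3) gnn gbnd elim(2) Wm[OF t] pAE[OF t] elim(4) gi0 h hc pos in auto)
      have n: "\<bar>n1 t x\<bar> \<le> (1 + p t) * (q t)\<^sup>2" using elim(7) nlb[OF elim(4) elim(5)] by linarith
      have "W s x = W t x + h * (R1 t x + D)" unfolding D_def h_def using s by (simp add: field_simps)
      also have "\<dots> = ((1 - h*f) * W t x + h*d1 * Gam \<Omega> \<gamma>1 (W t) x) - h * n1 t x + h * D"
        unfolding elim(6) by (simp add: algebra_simps)
      finally have "\<bar>W s x\<bar> \<le> \<bar>(1 - h*f) * W t x + h*d1 * Gam \<Omega> \<gamma>1 (W t) x\<bar> + h * \<bar>n1 t x\<bar> + h * \<bar>D\<bar>"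
        using h abs_tri3 by simp
      also have "\<dots> \<le> (1 - h*f) * p t + h * ((1 + p t) * (q t)\<^sup>2) + h * e"
        using key n elim(1) h unfolding D_def by (intro add_mono mult_left_mono) auto
      finally show ?case unfolding h_def by (simp add: algebra_simps)
    qed
  qed
  have stepQ: "q s \<le> (1 - (s - t) * (f + \<kappa>)) * q t + (s - t) * ((1 + p t) * (q t)\<^sup>2) + (s - t) * e"
    if t: "t \<in> J" and s: "s \<in> J" "t < s" "s - t \<le> h0"
      and lt: "linf \<Omega> (\<lambda>x. (V s x - V t x) / (s - t) - R2 t x) < ereal e" for s t e
  proof (rule qLe[OF s(1)])
    define h where "h = s - t"
    have h: "h > 0" "h * (f + \<kappa> + (d1 + d2) * gi) \<le> 1" using s h0pos pos gi0
      unfolding h_def h0_def by (auto simp: field_simps)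
    have hc: "h * (f + \<kappa>) + h * d2 * gi \<le> 1"
    proof -
      have "h * (f + \<kappa>) + h * d2 * gi \<le> h * (f + \<kappa> + (d1 + d2) * gi)"
        using h pos gi0 by (simp add: algebra_simps)
      then show ?thesis using h by linarith
    qed
    show "AE x in ?L. \<bar>V s x\<bar> \<le> (1 - (s - t) * (f + \<kappa>)) * q t + (s - t) * ((1 + p t) * (q t)\<^sup>2) + (s - t) * e"
      using linf_AE_lt[OF lt] inO g2m pAE[OF t] qAE[OF t] E2[OF t] N[OF t]
    proof eventually_elim
      case (elim x)
      define D where "D = (V s x - V t x) / (s - t) - R2 t x"
      have key: "\<bar>(1 - h*(f + \<kappa>)) * V t x + h*d2 * Gam \<Omega> \<gamma>2 (V t) x\<bar> \<le> (1 - h*(f + \<kappa>)) * q t"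
        by (rule Gam_key[where x=x and \<gamma>=\<gamma>2 and \<Omega>=\<Omega> and gi=gi and z="V t" and M="q t"])
           (use elim(3) gnn gbnd elim(2) Vm[OF t] qAE[OF t] elim(5) gi0 h hc pos in auto)
      have n: "\<bar>n2 t x\<bar> \<le> (1 + p t) * (q t)\<^sup>2" using elim(7) nlb[OF elim(4) elim(5)] by linarith
      have "V s x = V t x + h * (R2 t x + D)" unfolding D_def h_def using s by (simp add: field_simps)
      also have "\<dots> = ((1 - h*(f + \<kappa>)) * V t x + h*d2 * Gam \<Omega> \<gamma>2 (V t) x) + h * n2 t x + h * D"
        unfolding elim(6) by (simp add: algebra_simps)
      finally have "\<bar>V s x\<bar> \<le> \<bar>(1 - h*(f + \<kappa>)) * V t x + h*d2 * Gam \<Omega> \<gamma>2 (V t) x\<bar> + h * \<bar>n2 t x\<bar> + h * \<bar>D\<bar>"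
        using h abs_tri3 by simp
      also have "\<dots> \<le> (1 - h*(f + \<kappa>)) * q t + h * ((1 + p t) * (q t)\<^sup>2) + h * e"
        using key n elim(1) h unfolding D_def by (intro add_mono mult_left_mono) auto
      finally show ?case unfolding h_def by (simp add: algebra_simps)
    qed
  qed
  have step: "\<exists>\<delta>>0. \<forall>s\<in>J. t < s \<and> s < t + \<delta> \<longrightarrow> \<phi> s \<le> \<phi> t - (s - t) * (f/2) * \<phi> t + (s - t) * \<epsilon>"
    if t: "t \<in> J" and small: "\<phi> t < \<rho>" and e: "\<epsilon> > 0" for t \<epsilon>
  proof -
    have e2: "ereal 0 < ereal (\<epsilon>/2)" using e by simp
    have "eventually (\<lambda>s. linf \<Omega> (\<lambda>x. (W s x - W t x) / (s - t) - R1 t x) < ereal (\<epsilon>/2) \<and>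
        linf \<Omega> (\<lambda>x. (V s x - V t x) / (s - t) - R2 t x) < ereal (\<epsilon>/2)) (at t within J)"
      using order_tendstoD(2)[OF D1[OF t, unfolded zero_ereal_def] e2]
        order_tendstoD(2)[OF D2[OF t, unfolded zero_ereal_def] e2] by eventually_elim auto
    then obtain \<delta>0 where d0: "\<delta>0 > 0" "\<And>s. s \<in> J \<Longrightarrow> s \<noteq> t \<Longrightarrow> dist s t < \<delta>0 \<Longrightarrow>
        linf \<Omega> (\<lambda>x. (W s x - W t x) / (s - t) - R1 t x) < ereal (\<epsilon>/2) \<and>
        linf \<Omega> (\<lambda>x. (V s x - V t x) / (s - t) - R2 t x) < ereal (\<epsilon>/2)"
      unfolding eventually_at by blast
    have pt: "p t \<ge> 0" "q t \<ge> 0" using p0[OF t] q0[OF t] .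
    have small': "p t + q t < 1" "p t + q t < f/8" using small unfolding \<phi>_def \<rho>_def by auto
    have nl: "2 * ((1 + p t) * (q t)\<^sup>2) \<le> (f/2) * \<phi> t"
    proof -
      have "(1 + p t) \<le> 2" using small' pt by linarith
      then have "2 * ((1 + p t) * (q t)\<^sup>2) \<le> 2 * (2 * (q t)\<^sup>2)"
        by (intro mult_left_mono mult_right_mono) auto
      also have "\<dots> = 4 * (q t * q t)" by (simp add: power2_eq_square)
      also have "\<dots> \<le> 4 * (q t * (f/8))"
        using pt small' by (intro mult_left_mono) auto
      also have "\<dots> = (f/2) * q t" by simp
      also have "\<dots> \<le> (f/2) * \<phi> t" unfolding \<phi>_def using pt pos by (intro mult_left_mono) auto
      finally show ?thesis .
    qed
    show ?thesis
    proof (intro exI[of _ "min \<delta>0 h0"] conjI ballI impI)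
      show "min \<delta>0 h0 > 0" using d0 h0pos by simp
      fix s assume s: "s \<in> J" "t < s \<and> s < t + min \<delta>0 h0"
      have sl: "s - t \<le> h0" using s by auto
      have L: "linf \<Omega> (\<lambda>x. (W s x - W t x) / (s - t) - R1 t x) < ereal (\<epsilon>/2) \<and>
        linf \<Omega> (\<lambda>x. (V s x - V t x) / (s - t) - R2 t x) < ereal (\<epsilon>/2)"
        using d0(2)[of s] s by (auto simp: dist_real_def)
      have P: "p s \<le> (1 - (s - t) * f) * p t + (s - t) * ((1 + p t) * (q t)\<^sup>2) + (s - t) * (\<epsilon>/2)"
        using stepP[OF t s(1) _ sl, of "\<epsilon>/2"] L s by blast
      have Q: "q s \<le> (1 - (s - t) * (f + \<kappa>)) * q t + (s - t) * ((1 + p t) * (q t)\<^sup>2) + (s - t) * (\<epsilon>/2)"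
        using stepQ[OF t s(1) _ sl, of "\<epsilon>/2"] L s by blast
      have hk: "(s - t) * \<kappa> * q t \<ge> 0" using s pos pt by auto
      have hnl: "(s - t) * (2 * ((1 + p t) * (q t)\<^sup>2)) \<le> (s - t) * ((f/2) * \<phi> t)"
        using nl s by (intro mult_left_mono) auto
      have eq: "((1 - (s - t) * f) * p t + (s - t) * ((1 + p t) * (q t)\<^sup>2) + (s - t) * (\<epsilon>/2))
          + ((1 - (s - t) * (f + \<kappa>)) * q t + (s - t) * ((1 + p t) * (q t)\<^sup>2) + (s - t) * (\<epsilon>/2))
          = (1 - (s - t) * f) * p t + (1 - (s - t) * (f + \<kappa>)) * q t
          + (s - t) * (2 * ((1 + p t) * (q t)\<^sup>2)) + (s - t) * \<epsilon>"
        by (simp add: algebra_simps)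
      have "\<phi> s \<le> (1 - (s - t) * f) * p t + (1 - (s - t) * (f + \<kappa>)) * q t
          + (s - t) * (2 * ((1 + p t) * (q t)\<^sup>2)) + (s - t) * \<epsilon>"
        using P Q eq unfolding \<phi>_def by linarith
      also have "\<dots> = \<phi> t - (s - t) * f * \<phi> t - (s - t) * \<kappa> * q t
          + (s - t) * (2 * ((1 + p t) * (q t)\<^sup>2)) + (s - t) * \<epsilon>"
        unfolding \<phi>_def by (simp add: algebra_simps)
      also have "\<dots> \<le> \<phi> t - (s - t) * f * \<phi> t + (s - t) * ((f/2) * \<phi> t) + (s - t) * \<epsilon>"
        using hk hnl by linarith
      also have "\<dots> = \<phi> t - (s - t) * (f/2) * \<phi> t + (s - t) * \<epsilon>" by (simp add: algebra_simps)
      finally show "\<phi> s \<le> \<phi> t - (s - t) * (f/2) * \<phi> t + (s - t) * \<epsilon>" .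
    qed
  qed
  have "\<forall>t\<in>J. \<phi> t \<le> C * exp (- (f/4) * t)"
  proof (rule dini_decay[OF J0 Jpos Jdown cont step])
    show "0 < f/4" "f/4 < f/2" using pos by auto
    show "0 < C" "C < \<rho>" using C unfolding \<rho>_def by auto
    show "\<phi> 0 \<le> C" using C unfolding \<phi>_def p_def q_def by simp
  qed auto
  then show ?thesis unfolding \<phi>_def p_def q_def by simp
qed



lemma meas_AE_on:
  fixes \<Omega> :: "'a::euclidean_space set" and f g :: "'a \<Rightarrow> real"
  assumes "open \<Omega>" "f \<in> borel_measurable (lebesgue_on \<Omega>)" "AE x in lebesgue_on \<Omega>. f x = g x"
  shows "g \<in> borel_measurable (lebesgue_on \<Omega>)"
proof -
  have O: "\<Omega> \<in> sets lebesgue" using assms(1) by simp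
  have fe: "(\<lambda>x. indicator \<Omega> x *\<^sub>R f x) \<in> borel_measurable lebesgue"
    using assms(2) borel_measurable_restrict_space_iff[of \<Omega> lebesgue f] O by simp
  have "AE x in lebesgue. x \<in> \<Omega> \<longrightarrow> f x = g x"
    using assms(3) O by (simp add: AE_restrict_space_iff)
  then have "AE x in lebesgue. indicator \<Omega> x *\<^sub>R f x = indicator \<Omega> x *\<^sub>R g x"
    by eventually_elim (auto simp: indicator_def)
  then have "(\<lambda>x. indicator \<Omega> x *\<^sub>R g x) \<in> borel_measurable lebesgue"
    by (rule borel_measurable_AE[OF fe])
  then show ?thesis using borel_measurable_restrict_space_iff[of \<Omega> lebesgue g] O by simp
qed

lemma AE_lborel_to_on:
  fixes \<Omega> :: "'a::euclidean_space set"
  assumes "open \<Omega>" "AE x in lborel. P x"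
  shows "AE x in lebesgue_on \<Omega>. P x"
proof -
  have "AE x in lebesgue. P x" using assms(2) by (rule AE_completion)
  then show ?thesis using assms(1) by (simp add: AE_restrict_space_iff eventually_mono)
qed

lemma gamma_fubini:
  fixes \<Omega> :: "'a::euclidean_space set" and \<gamma> :: "'a \<Rightarrow> 'a \<Rightarrow> real"
  assumes O: "open \<Omega>"
    and gm: "(\<lambda>p. \<gamma> (fst p) (snd p)) \<in> borel_measurable (lebesgue_on (\<Omega> \<times> \<Omega>))"
  shows "AE x in lebesgue_on \<Omega>. (\<lambda>y. \<gamma> x y) \<in> borel_measurable (lebesgue_on \<Omega>)"
    and "\<And>z. z \<in> borel_measurable (lebesgue_on \<Omega>) \<Longrightarrow> Gam \<Omega> \<gamma> z \<in> borel_measurable (lebesgue_on \<Omega>)"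
proof -
  have OO: "\<Omega> \<times> \<Omega> \<in> sets lebesgue" using O by (simp add: open_Times)
  have Os: "\<Omega> \<in> sets lebesgue" using O by simp
  define H where "H p = indicator (\<Omega> \<times> \<Omega>) p *\<^sub>R \<gamma> (fst p) (snd p)" for p :: "'a \<times> 'a"
  have Hm: "H \<in> borel_measurable lebesgue"
    using gm borel_measurable_restrict_space_iff[of "\<Omega> \<times> \<Omega>" lebesgue "\<lambda>p. \<gamma> (fst p) (snd p)"] OO
    unfolding H_def by simp
  obtain g where gB: "g \<in> borel_measurable lborel" and Hg: "AE p in lborel. H p = g p"
    using completion_ex_borel_measurable_real[OF Hm] by blast
  have gB2: "g \<in> borel_measurable (lborel \<Otimes>\<^sub>M lborel)" using gB by (simp add: lborel_prod)
  have Hg2: "AE p in (lborel \<Otimes>\<^sub>M lborel). H p = g p" using Hg by (subst lborel_prod)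
  have AEx: "AE x in lborel. AE y in lborel. H (x, y) = g (x, y)"
    by (rule lborel_pair.AE_pair[OF Hg2])
  have good: "(\<lambda>y. \<gamma> x y) \<in> borel_measurable (lebesgue_on \<Omega>)"
    if x: "x \<in> \<Omega>" "AE y in lborel. H (x, y) = g (x, y)" for x
  proof -
    have "(\<lambda>y. g (x, y)) \<in> borel_measurable lborel" using gB2 by measurable
    then have gl: "(\<lambda>y. g (x, y)) \<in> borel_measurable lebesgue" by (rule measurable_completion)
    have "AE y in lebesgue. g (x, y) = H (x, y)" using AE_completion[OF x(2)] by (auto elim: eventually_mono)
    then have "(\<lambda>y. H (x, y)) \<in> borel_measurable lebesgue" by (rule borel_measurable_AE[OF gl])
    moreover have "H (x, y) = indicator \<Omega> y *\<^sub>R \<gamma> x y" for y using x(1) unfolding H_def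
      by (simp add: indicator_def)
    ultimately have "(\<lambda>y. indicator \<Omega> y *\<^sub>R \<gamma> x y) \<in> borel_measurable lebesgue" by simp
    then show ?thesis using borel_measurable_restrict_space_iff[of \<Omega> lebesgue "\<lambda>y. \<gamma> x y"] Os by simp
  qed
  have AEx': "AE x in lebesgue_on \<Omega>. x \<in> \<Omega> \<and> (AE y in lborel. H (x, y) = g (x, y))"
  proof -
    have "AE x in lebesgue_on \<Omega>. AE y in lborel. H (x, y) = g (x, y)" by (rule AE_lborel_to_on[OF O AEx])
    moreover have "AE x in lebesgue_on \<Omega>. x \<in> \<Omega>" using O by (metis AE_space space_leb_on)
    ultimately show ?thesis by eventually_elim auto
  qed
  show "AE x in lebesgue_on \<Omega>. (\<lambda>y. \<gamma> x y) \<in> borel_measurable (lebesgue_on \<Omega>)"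
    using AEx' by eventually_elim (use good in auto)
  fix z :: "'a \<Rightarrow> real" assume zm: "z \<in> borel_measurable (lebesgue_on \<Omega>)"
  have zE: "(\<lambda>y. indicator \<Omega> y *\<^sub>R z y) \<in> borel_measurable lebesgue"
    using zm borel_measurable_restrict_space_iff[of \<Omega> lebesgue z] Os by simp
  obtain zB where zB: "zB \<in> borel_measurable lborel" and zz: "AE y in lborel. indicator \<Omega> y *\<^sub>R z y = zB y"
    using completion_ex_borel_measurable_real[OF zE] by blast
  define \<Phi> where "\<Phi> q = (\<integral>y. g (fst q, y) * (zB y - snd q) \<partial>lborel)" for q :: "'a \<times> real"
  have \<Phi>m: "\<Phi> \<in> borel_measurable ((borel :: 'a measure) \<Otimes>\<^sub>M (borel :: real measure))"
  proof -
    have gb[measurable]: "g \<in> borel_measurable (borel \<Otimes>\<^sub>M borel)" using gB by (simp add: borel_prod)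
    have zb[measurable]: "zB \<in> borel_measurable borel" using zB by simp
    have "(\<lambda>(q, y). g (fst q, y) * (zB y - snd q)) \<in> borel_measurable (((borel :: 'a measure) \<Otimes>\<^sub>M (borel :: real measure)) \<Otimes>\<^sub>M borel)"
      by measurable
    moreover have "sets (((borel :: 'a measure) \<Otimes>\<^sub>M (borel :: real measure)) \<Otimes>\<^sub>M lborel) = sets (((borel :: 'a measure) \<Otimes>\<^sub>M (borel :: real measure)) \<Otimes>\<^sub>M borel)"
      by (rule sets_pair_measure_cong[OF refl sets_lborel])
    ultimately have "(\<lambda>(q, y). g (fst q, y) * (zB y - snd q)) \<in> borel_measurable (((borel :: 'a measure) \<Otimes>\<^sub>M (borel :: real measure)) \<Otimes>\<^sub>M lborel)"
      using measurable_cong_sets by blast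
    then show ?thesis unfolding \<Phi>_def by (rule lborel.borel_measurable_lebesgue_integral)
  qed
  have idm: "(\<lambda>x. x) \<in> lebesgue_on \<Omega> \<rightarrow>\<^sub>M (borel :: 'a measure)"
    by (intro measurable_restrict_space1 measurable_completion) (simp add: measurable_ident_sets)
  have pm: "(\<lambda>x. (x, z x)) \<in> lebesgue_on \<Omega> \<rightarrow>\<^sub>M ((borel :: 'a measure) \<Otimes>\<^sub>M (borel :: real measure))"
    using idm zm by (intro measurable_Pair) auto
  have cm: "(\<lambda>x. \<Phi> (x, z x)) \<in> borel_measurable (lebesgue_on \<Omega>)"
    using measurable_compose[OF pm \<Phi>m] by simp
  have "AE x in lebesgue_on \<Omega>. \<Phi> (x, z x) = Gam \<Omega> \<gamma> z x"
    using AEx'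
  proof eventually_elim
    case (elim x)
    then have x: "x \<in> \<Omega>" and ae: "AE y in lborel. H (x, y) = g (x, y)" by auto
    have gx: "(\<lambda>y. \<gamma> x y) \<in> borel_measurable (lebesgue_on \<Omega>)" using good x ae by blast
    have m1: "(\<lambda>y. \<gamma> x y * (z y - z x)) \<in> borel_measurable (lebesgue_on \<Omega>)"
      using gx zm by measurable
    have m1e: "(\<lambda>y. indicator \<Omega> y *\<^sub>R (\<gamma> x y * (z y - z x))) \<in> borel_measurable lebesgue"
      using m1 borel_measurable_restrict_space_iff[of \<Omega> lebesgue "\<lambda>y. \<gamma> x y * (z y - z x)"] Os by simp
    have m2: "(\<lambda>y. g (x, y) * (zB y - z x)) \<in> borel_measurable lborel"
      using gB2 zB by measurable
    have "AE y in lborel. indicator \<Omega> y *\<^sub>R (\<gamma> x y * (z y - z x)) = g (x, y) * (zB y - z x)"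
      using ae zz
    proof eventually_elim
      case (elim y)
      show ?case
      proof (cases "y \<in> \<Omega>")
        case True
        then show ?thesis using elim x unfolding H_def by (simp add: indicator_def)
      next
        case False
        then have "H (x, y) = 0" unfolding H_def by simp
        then show ?thesis using elim False by simp
      qed
    qed
    then have ae2: "AE y in lebesgue. indicator \<Omega> y *\<^sub>R (\<gamma> x y * (z y - z x)) = g (x, y) * (zB y - z x)"
      by (rule AE_completion)
    have "Gam \<Omega> \<gamma> z x = (LINT y|lebesgue. indicator \<Omega> y *\<^sub>R (\<gamma> x y * (z y - z x)))"
      unfolding Gam_def using Os by (simp add: integral_restrict_space)
    also have "\<dots> = (LINT y|lebesgue. g (x, y) * (zB y - z x))"
      by (rule integral_cong_AE[OF m1e measurable_completion[OF m2] ae2])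
    also have "\<dots> = (LINT y|lborel. g (x, y) * (zB y - z x))"
      by (rule integral_completion[OF m2])
    finally show ?case unfolding \<Phi>_def by simp
  qed
  then show "Gam \<Omega> \<gamma> z \<in> borel_measurable (lebesgue_on \<Omega>)"
    by (rule meas_AE_on[OF O cm])
qed



lemma time_intervals_props:
  assumes "J \<in> time_intervals"
  shows "0 \<in> J" "\<And>t. t \<in> J \<Longrightarrow> 0 \<le> t" "\<And>s t. t \<in> J \<Longrightarrow> 0 \<le> s \<Longrightarrow> s \<le> t \<Longrightarrow> s \<in> J"
  using assms unfolding time_intervals_def by auto

lemma Gam_shift: "Gam \<Omega> \<gamma> (\<lambda>x. z x - c) x = Gam \<Omega> \<gamma> z x"
  unfolding Gam_def by simp

lemma inX_shift:
  assumes "inX \<Omega> z" "open \<Omega>" "\<Omega> \<noteq> {}"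
  shows "inX \<Omega> (\<lambda>x. z x - c)"
proof -
  have pos0: "emeasure (lebesgue_on \<Omega>) (space (lebesgue_on \<Omega>)) \<noteq> 0" using leb_on_pos assms(2,3) by blast
  have zm: "z \<in> borel_measurable (lebesgue_on \<Omega>)" using assms(1) unfolding inX_def by simp
  then have m: "(\<lambda>x. z x - c) \<in> borel_measurable (lebesgue_on \<Omega>)" by measurable
  have "AE x in lebesgue_on \<Omega>. \<bar>z x - c\<bar> \<le> nrm \<Omega> z + \<bar>c\<bar>"
    using inX_nrm(3)[OF assms(1) pos0] by eventually_elim linarith
  then have "linf \<Omega> (\<lambda>x. z x - c) \<le> ereal (nrm \<Omega> z + \<bar>c\<bar>)" by (rule linf_le[OF m])
  then have "linf \<Omega> (\<lambda>x. z x - c) < \<infinity>" using le_less_trans by fastforce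
  with m show ?thesis unfolding inX_def by simp
qed

lemma sol_decay:
  fixes \<Omega> :: "'a::euclidean_space set"
    and d1 d2 f \<kappa> \<gamma>inf :: real
    and \<gamma>1 \<gamma>2 :: "'a \<Rightarrow> 'a \<Rightarrow> real"
  assumes dom: "open \<Omega>" "\<Omega> \<noteq> {}"
    and pos: "d1 > 0" "d2 > 0" "f > 0" "\<kappa> > 0"
    and ginf: "\<gamma>inf \<ge> 1"
    and gmeas: "\<And>\<gamma>. \<gamma> \<in> {\<gamma>1, \<gamma>2} \<Longrightarrow>
                  (\<lambda>p. \<gamma> (fst p) (snd p)) \<in> borel_measurable (lebesgue_on (\<Omega> \<times> \<Omega>))"
    and gnn: "\<And>\<gamma> x y. \<gamma> \<in> {\<gamma>1, \<gamma>2} \<Longrightarrow> x \<in> \<Omega> \<Longrightarrow> y \<in> \<Omega> \<Longrightarrow> \<gamma> x y \<ge> 0"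
    and gbnd: "\<And>\<gamma> x. \<gamma> \<in> {\<gamma>1, \<gamma>2} \<Longrightarrow> x \<in> \<Omega> \<Longrightarrow>
                 (\<integral>\<^sup>+ y. ennreal (\<gamma> x y) \<partial>lebesgue_on \<Omega>) \<le> ennreal \<gamma>inf"
    and J: "J \<in> time_intervals"
    and sol: "is_sol \<Omega> d1 d2 f \<kappa> \<gamma>1 \<gamma>2 J U V"
    and C: "0 < C" "C < min 1 (f/8)" "dist10 \<Omega> (U 0) (V 0) \<le> ereal C"
  shows "\<forall>t\<in>J. dist10 \<Omega> (U t) (V t) = ereal (nrm \<Omega> (\<lambda>x. U t x - 1) + nrm \<Omega> (V t)) \<and>
      0 \<le> nrm \<Omega> (\<lambda>x. U t x - 1) + nrm \<Omega> (V t) \<and>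
      nrm \<Omega> (\<lambda>x. U t x - 1) + nrm \<Omega> (V t) \<le> C * exp (- (f/4) * t)"
proof -
  note Jp = time_intervals_props[OF J]
  have pos0: "emeasure (lebesgue_on \<Omega>) (space (lebesgue_on \<Omega>)) \<noteq> 0" using leb_on_pos dom by blast
  define W where "W t x = U t x - 1" for t x
  have XU: "inX \<Omega> (U t) \<and> inX \<Omega> (V t)" if "t \<in> J" for t using sol that unfolding is_sol_def by auto
  have X: "inX \<Omega> (W t) \<and> inX \<Omega> (V t)" if "t \<in> J" for t
    using XU[OF that] inX_shift[of \<Omega> "U t" 1] dom unfolding W_def by auto
  have dd: "dist10 \<Omega> (U t) (V t) = ereal (nrm \<Omega> (W t) + nrm \<Omega> (V t))" if "t \<in> J" for t
    using inX_nrm(1)[OF conjunct1[OF X[OF that]] pos0] inX_nrm(1)[OF conjunct2[OF X[OF that]] pos0]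
    unfolding dist10_def W_def[abs_def] by simp
  have nn: "0 \<le> nrm \<Omega> (W t) + nrm \<Omega> (V t)" if "t \<in> J" for t
    using inX_nrm(2)[OF conjunct1[OF X[OF that]] pos0] inX_nrm(2)[OF conjunct2[OF X[OF that]] pos0] by simp
  have good: "AE x in lebesgue_on \<Omega>. (\<lambda>y. \<gamma>1 x y) \<in> borel_measurable (lebesgue_on \<Omega>) \<and>
                  (\<lambda>y. \<gamma>2 x y) \<in> borel_measurable (lebesgue_on \<Omega>)"
  proof -
    have g1: "(\<lambda>p. \<gamma>1 (fst p) (snd p)) \<in> borel_measurable (lebesgue_on (\<Omega> \<times> \<Omega>))" using gmeas by simp
    have g2: "(\<lambda>p. \<gamma>2 (fst p) (snd p)) \<in> borel_measurable (lebesgue_on (\<Omega> \<times> \<Omega>))" using gmeas by simp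
    show ?thesis using gamma_fubini(1)[OF dom(1) g1] gamma_fubini(1)[OF dom(1) g2]
      by eventually_elim auto
  qed
  have dec: "\<forall>t\<in>J. nrm \<Omega> (W t) + nrm \<Omega> (V t) \<le> C * exp (- (f/4) * t)"
  proof (rule stab_generic[where \<Omega>=\<Omega> and ?\<gamma>1.0=\<gamma>1 and ?\<gamma>2.0=\<gamma>2 and ?d1.0=d1 and ?d2.0=d2 and f=f
        and \<kappa>=\<kappa> and gi=\<gamma>inf and J=J and W=W and V=V and C=C and
        ?R1.0 = "\<lambda>t x. d1 * Gam \<Omega> \<gamma>1 (U t) x - U t x * (V t x)\<^sup>2 + f * (1 - U t x)" and
        ?R2.0 = "\<lambda>t x. d2 * Gam \<Omega> \<gamma>2 (V t) x + U t x * (V t x)\<^sup>2 - (f + \<kappa>) * V t x" and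
        ?n1.0 = "\<lambda>t x. U t x * (V t x)\<^sup>2" and ?n2.0 = "\<lambda>t x. U t x * (V t x)\<^sup>2"])
    show "((\<lambda>s. linf \<Omega> (\<lambda>x. (W s x - W t x) / (s - t) -
          (d1 * Gam \<Omega> \<gamma>1 (U t) x - U t x * (V t x)\<^sup>2 + f * (1 - U t x)))) \<longlongrightarrow> 0) (at t within J)"
      if "t \<in> J" for t using sol that unfolding is_sol_def W_def by simp
    show "((\<lambda>s. linf \<Omega> (\<lambda>x. (V s x - V t x) / (s - t) -
          (d2 * Gam \<Omega> \<gamma>2 (V t) x + U t x * (V t x)\<^sup>2 - (f + \<kappa>) * V t x))) \<longlongrightarrow> 0) (at t within J)"
      if "t \<in> J" for t using sol that unfolding is_sol_def by simp
    show "AE x in lebesgue_on \<Omega>. d1 * Gam \<Omega> \<gamma>1 (U t) x - U t x * (V t x)\<^sup>2 + f * (1 - U t x) =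
        d1 * Gam \<Omega> \<gamma>1 (W t) x - f * W t x - U t x * (V t x)\<^sup>2" for t
      unfolding W_def Gam_shift by (simp add: algebra_simps)
    show "AE x in lebesgue_on \<Omega>. d2 * Gam \<Omega> \<gamma>2 (V t) x + U t x * (V t x)\<^sup>2 - (f + \<kappa>) * V t x =
        d2 * Gam \<Omega> \<gamma>2 (V t) x - (f + \<kappa>) * V t x + U t x * (V t x)\<^sup>2" for t
      by (simp add: algebra_simps)
    show "AE x in lebesgue_on \<Omega>. \<bar>U t x * (V t x)\<^sup>2\<bar> \<le> (1 + \<bar>W t x\<bar>) * (V t x)\<^sup>2 \<and>
        \<bar>U t x * (V t x)\<^sup>2\<bar> \<le> (1 + \<bar>W t x\<bar>) * (V t x)\<^sup>2" for t
    proof (rule AE_I2)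
      fix x
      have "\<bar>U t x\<bar> \<le> 1 + \<bar>W t x\<bar>" unfolding W_def by linarith
      then have "\<bar>U t x\<bar> * (V t x)\<^sup>2 \<le> (1 + \<bar>W t x\<bar>) * (V t x)\<^sup>2" by (rule mult_right_mono) simp
      then show "\<bar>U t x * (V t x)\<^sup>2\<bar> \<le> (1 + \<bar>W t x\<bar>) * (V t x)\<^sup>2 \<and>
        \<bar>U t x * (V t x)\<^sup>2\<bar> \<le> (1 + \<bar>W t x\<bar>) * (V t x)\<^sup>2" by (simp add: abs_mult)
    qed
    show "0 < C" "C < min 1 (f/8)" using C by auto
    show "nrm \<Omega> (W 0) + nrm \<Omega> (V 0) \<le> C" using C(3) dd[OF Jp(1)] by simp
  qed (fact dom pos ginf good gnn gbnd Jp X)+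
  show ?thesis using dec dd nn unfolding W_def[abs_def] by simp
qed



definition ev :: "(('a \<times> bool) discrete \<Rightarrow>\<^sub>C real) \<Rightarrow> 'a \<Rightarrow> bool \<Rightarrow> real" where
  "ev z x b = apply_bcontfun z (discrete (x, b))"

definition mkE :: "('a \<Rightarrow> bool \<Rightarrow> real) \<Rightarrow> (('a \<times> bool) discrete \<Rightarrow>\<^sub>C real)" where
  "mkE g = Bcontfun (\<lambda>p. g (fst (of_discrete p)) (snd (of_discrete p)))"

lemma cont_discrete: "continuous_on UNIV (h :: 'b discrete \<Rightarrow> 'c::topological_space)"
  unfolding continuous_on_open_invariant by (auto intro!: exI[of _ "h -` _"] simp: open_discrete)

lemma ev_mkE: assumes "\<And>x b. \<bar>g x b\<bar> \<le> K" shows "ev (mkE g) x b = g x b"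
proof -
  have "(\<lambda>p. g (fst (of_discrete p)) (snd (of_discrete p))) \<in> bcontfun"
    by (rule bcontfun_normI[OF cont_discrete]) (use assms in simp)
  then show ?thesis unfolding ev_def mkE_def by (simp add: Bcontfun_inverse discrete_inverse)
qed

lemma ev_bound: "\<bar>ev z x b\<bar> \<le> norm z"
  unfolding ev_def using norm_bounded[of z] by simp

lemma norm_ev_le: assumes "\<And>x b. \<bar>ev z x b\<bar> \<le> K" shows "norm z \<le> K"
proof (rule norm_bound)
  fix p :: "('a \<times> bool) discrete"
  obtain x b where "p = discrete (x, b)" by (metis of_discrete_inverse surj_pair)
  then show "norm (apply_bcontfun z p) \<le> K" using assms[of x b] unfolding ev_def by simp
qed

lemma norm_mkE: assumes "\<And>x b. \<bar>g x b\<bar> \<le> K" shows "norm (mkE g) \<le> K"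
  by (rule norm_ev_le) (simp add: ev_mkE[OF assms] assms)

lemma ev_simps[simp]:
  "ev (z1 + z2) x b = ev z1 x b + ev z2 x b"
  "ev (z1 - z2) x b = ev z1 x b - ev z2 x b"
  "ev (c *\<^sub>R z) x b = c * ev z x b"
  "ev 0 x b = 0"
  "ev (- z) x b = - ev z x b"
  unfolding ev_def by simp_all

lemma ev_sum: "finite A \<Longrightarrow> ev (\<Sum>i\<in>A. F i) x b = (\<Sum>i\<in>A. ev (F i) x b)"
  by (induction A rule: finite_induct) auto

lemma ev_tendsto:
  assumes "(zs \<longlongrightarrow> z) F"
  shows "((\<lambda>n. ev (zs n) x b) \<longlongrightarrow> ev z x b) F"
proof (rule tendstoI)
  fix e :: real assume "e > 0"
  with tendstoD[OF assms] have "eventually (\<lambda>n. dist (zs n) z < e) F" by blast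
  then show "eventually (\<lambda>n. dist (ev (zs n) x b) (ev z x b) < e) F"
  proof eventually_elim
    case (elim n)
    have "dist (ev (zs n) x b) (ev z x b) \<le> dist (zs n) z" unfolding ev_def by (rule dist_bounded)
    then show ?case using elim by simp
  qed
qed

definition Mset :: "'a::euclidean_space set \<Rightarrow> (('a \<times> bool) discrete \<Rightarrow>\<^sub>C real) set" where
  "Mset \<Omega> = {z. \<forall>b. (\<lambda>x. ev z x b) \<in> borel_measurable (lebesgue_on \<Omega>)}"

lemma Mset_closed: "closed (Mset \<Omega>)"
  unfolding closed_sequential_limits
proof (intro allI impI, elim conjE)
  fix zs z assume zs: "\<forall>n. zs n \<in> Mset \<Omega>" and lim: "zs \<longlonglongrightarrow> z"
  show "z \<in> Mset \<Omega>" unfolding Mset_def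
  proof (intro CollectI allI)
    fix b
    show "(\<lambda>x. ev z x b) \<in> borel_measurable (lebesgue_on \<Omega>)"
    proof (rule borel_measurable_LIMSEQ_real)
      show "(\<lambda>n. ev (zs n) x b) \<longlonglongrightarrow> ev z x b" for x by (rule ev_tendsto[OF lim])
      show "(\<lambda>x. ev (zs n) x b) \<in> borel_measurable (lebesgue_on \<Omega>)" for n
        using zs unfolding Mset_def by auto
    qed
  qed
qed

lemma Mset_subspace: "subspace (Mset \<Omega>)"
  unfolding subspace_def Mset_def by (auto intro: borel_measurable_add borel_measurable_const borel_measurable_times)

lemma Mset_ops:
  "0 \<in> Mset \<Omega>" "z1 \<in> Mset \<Omega> \<Longrightarrow> z2 \<in> Mset \<Omega> \<Longrightarrow> z1 + z2 \<in> Mset \<Omega>"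
  "z1 \<in> Mset \<Omega> \<Longrightarrow> z2 \<in> Mset \<Omega> \<Longrightarrow> z1 - z2 \<in> Mset \<Omega>"
  "z \<in> Mset \<Omega> \<Longrightarrow> c *\<^sub>R z \<in> Mset \<Omega>"
  using Mset_subspace[of \<Omega>] by (auto simp: subspace_0 subspace_add subspace_diff subspace_scale)

lemma integral_in_closed_subspace:
  fixes f :: "'n::euclidean_space \<Rightarrow> 'b::real_normed_vector"
  assumes S: "closed S" "subspace S"
    and fi: "(f has_integral y) (cbox a c)"
    and fS: "\<And>x. x \<in> cbox a c \<Longrightarrow> f x \<in> S"
  shows "y \<in> S"
proof -
  have "\<forall>e>0. \<exists>z\<in>S. dist z y < e"
  proof (intro allI impI)
    fix e :: real assume e: "e > 0"
    from fi[unfolded has_integral, rule_format, OF e] obtain g where g: "gauge g"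
      "\<forall>D. D tagged_division_of (cbox a c) \<and> g fine D \<longrightarrow>
         norm ((\<Sum>(x, k)\<in>D. Henstock_Kurzweil_Integration.content k *\<^sub>R f x) - y) < e"
      by (elim exE conjE) (rule that)
    obtain D where D: "D tagged_division_of (cbox a c)" "g fine D"
      by (rule fine_division_exists[OF g(1), of a c])
    have "(\<Sum>(x, k)\<in>D. Henstock_Kurzweil_Integration.content k *\<^sub>R f x) \<in> S"
    proof (rule subspace_sum[OF S(2)])
      fix p assume "p \<in> D"
      then obtain x k where p: "p = (x, k)" "(x, k) \<in> D" by (cases p) auto
      have "x \<in> cbox a c" using tagged_division_ofD(2,3)[OF D(1) p(2)] by blast
      then show "(\<lambda>(x, k). Henstock_Kurzweil_Integration.content k *\<^sub>R f x) p \<in> S"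
        unfolding p(1) using fS S(2) by (simp add: subspace_scale)
    qed
    moreover have "norm ((\<Sum>(x, k)\<in>D. Henstock_Kurzweil_Integration.content k *\<^sub>R f x) - y) < e"
      using g(2) D by blast
    ultimately show "\<exists>z\<in>S. dist z y < e" by (auto simp: dist_norm)
  qed
  then show ?thesis using S(1) closed_approachable by blast
qed



lemma Gam_diff:
  fixes \<Omega> :: "'a::euclidean_space set" and \<gamma> :: "'a \<Rightarrow> 'a \<Rightarrow> real"
  assumes gm: "(\<lambda>y. \<gamma> x y) \<in> borel_measurable (lebesgue_on \<Omega>)"
    and gnn: "\<And>y. y \<in> \<Omega> \<Longrightarrow> \<gamma> x y \<ge> 0"
    and gb: "(\<integral>\<^sup>+ y. ennreal (\<gamma> x y) \<partial>lebesgue_on \<Omega>) \<le> ennreal gi"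
    and w: "w1 \<in> borel_measurable (lebesgue_on \<Omega>)" "w2 \<in> borel_measurable (lebesgue_on \<Omega>)"
    and wb: "\<And>y. \<bar>w1 y\<bar> \<le> K" "\<And>y. \<bar>w2 y\<bar> \<le> K"
  shows "Gam \<Omega> \<gamma> w1 x - Gam \<Omega> \<gamma> w2 x = Gam \<Omega> \<gamma> (\<lambda>y. w1 y - w2 y) x"
proof -
  let ?L = "lebesgue_on \<Omega>"
  have nnAE: "AE y in ?L. \<gamma> x y \<ge> 0"
    by (rule AE_I2) (auto intro: gnn)
  have fin: "(\<integral>\<^sup>+ y. ennreal (norm (\<gamma> x y)) \<partial>?L) < \<infinity>"
  proof -
    have "(\<integral>\<^sup>+ y. ennreal (norm (\<gamma> x y)) \<partial>?L) = (\<integral>\<^sup>+ y. ennreal (\<gamma> x y) \<partial>?L)"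
      by (rule nn_integral_cong_AE) (use nnAE in \<open>auto\<close>)
    also have "\<dots> < \<infinity>" using gb by (simp add: le_less_trans)
    finally show ?thesis .
  qed
  have gint: "integrable ?L (\<lambda>y. \<gamma> x y)" by (rule integrableI_bounded[OF gm fin])
  have K0: "K \<ge> 0" using wb(1)[of x] by linarith
  have int: "integrable ?L (\<lambda>y. \<gamma> x y * (w y - w x))"
    if wm: "w \<in> borel_measurable ?L" and wb': "\<And>y. \<bar>w y\<bar> \<le> K" for w
  proof (rule Bochner_Integration.integrable_bound)
    show "integrable ?L (\<lambda>y. (2 * K) * \<gamma> x y)" using gint by simp
    show "(\<lambda>y. \<gamma> x y * (w y - w x)) \<in> borel_measurable ?L" using gm wm by measurable
    show "AE y in ?L. norm (\<gamma> x y * (w y - w x)) \<le> norm ((2 * K) * \<gamma> x y)"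
      using nnAE
    proof eventually_elim
      case (elim y)
      have "\<bar>w y - w x\<bar> \<le> 2 * K" using wb'[of y] wb'[of x] by linarith
      then have "\<gamma> x y * \<bar>w y - w x\<bar> \<le> \<gamma> x y * (2 * K)" using elim by (intro mult_left_mono) auto
      then show ?case using elim K0 by (simp add: abs_mult mult.commute)
    qed
  qed
  have "Gam \<Omega> \<gamma> w1 x - Gam \<Omega> \<gamma> w2 x = (LINT y|?L. \<gamma> x y * (w1 y - w1 x) - \<gamma> x y * (w2 y - w2 x))"
    unfolding Gam_def by (rule Bochner_Integration.integral_diff[symmetric, OF int[OF w(1) wb(1)] int[OF w(2) wb(2)]])
  also have "\<dots> = Gam \<Omega> \<gamma> (\<lambda>y. w1 y - w2 y) x" unfolding Gam_def by (simp add: algebra_simps)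
  finally show ?thesis .
qed

definition cl :: "real \<Rightarrow> real" where "cl s = max (-1) (min 1 s)"

lemma cl_props: "\<bar>cl a\<bar> \<le> 1" "\<bar>cl a\<bar> \<le> \<bar>a\<bar>" "\<bar>cl a - cl b\<bar> \<le> \<bar>a - b\<bar>" "\<bar>a\<bar> \<le> 1 \<Longrightarrow> cl a = a"
  unfolding cl_def by auto

definition Nl :: "real \<Rightarrow> real \<Rightarrow> real" where "Nl a b = (1 + cl a) * (cl b)\<^sup>2"

lemma Nl_bound: "\<bar>Nl a b\<bar> \<le> 2 * \<bar>b\<bar>" "\<bar>Nl a b\<bar> \<le> (1 + \<bar>a\<bar>) * b\<^sup>2"
proof -
  have c1: "\<bar>1 + cl a\<bar> \<le> 2" "\<bar>1 + cl a\<bar> \<le> 1 + \<bar>a\<bar>" using cl_props(1,2)[of a] by linarith+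
  have c2: "(cl b)\<^sup>2 \<le> \<bar>b\<bar>"
  proof -
    have "(cl b)\<^sup>2 = \<bar>cl b\<bar> * \<bar>cl b\<bar>" by (simp add: power2_eq_square abs_mult_self_eq)
    also have "\<dots> \<le> 1 * \<bar>b\<bar>" using cl_props(1,2)[of b] by (intro mult_mono) auto
    finally show ?thesis by simp
  qed
  have c3: "(cl b)\<^sup>2 \<le> b\<^sup>2"
  proof -
    have "\<bar>cl b\<bar> \<le> \<bar>b\<bar>" by (rule cl_props(2))
    then show ?thesis by (simp add: abs_le_square_iff)
  qed
  have "\<bar>Nl a b\<bar> = \<bar>1 + cl a\<bar> * (cl b)\<^sup>2" unfolding Nl_def by (simp add: abs_mult)
  then show "\<bar>Nl a b\<bar> \<le> 2 * \<bar>b\<bar>" "\<bar>Nl a b\<bar> \<le> (1 + \<bar>a\<bar>) * b\<^sup>2"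
    using c1 c2 c3 by (auto intro!: mult_mono)
qed

lemma Nl_lip: "\<bar>Nl a1 b1 - Nl a2 b2\<bar> \<le> \<bar>a1 - a2\<bar> + 4 * \<bar>b1 - b2\<bar>"
proof -
  have e: "Nl a1 b1 - Nl a2 b2 = (cl a1 - cl a2) * (cl b1)\<^sup>2 + (1 + cl a2) * ((cl b1 - cl b2) * (cl b1 + cl b2))"
    unfolding Nl_def by (simp add: algebra_simps power2_eq_square)
  have t1: "\<bar>(cl a1 - cl a2) * (cl b1)\<^sup>2\<bar> \<le> \<bar>a1 - a2\<bar> * 1"
  proof -
    have "(cl b1)\<^sup>2 \<le> 1" using cl_props(1)[of b1] by (simp add: abs_le_square_iff[of _ 1, simplified])
    then have "\<bar>cl a1 - cl a2\<bar> * (cl b1)\<^sup>2 \<le> \<bar>a1 - a2\<bar> * 1"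
      using cl_props(3)[of a1 a2] by (intro mult_mono) auto
    then show ?thesis by (simp add: abs_mult)
  qed
  have t2: "\<bar>(1 + cl a2) * ((cl b1 - cl b2) * (cl b1 + cl b2))\<bar> \<le> 2 * (\<bar>b1 - b2\<bar> * 2)"
  proof -
    have "\<bar>1 + cl a2\<bar> \<le> 2" using cl_props(1)[of a2] by linarith
    moreover have "\<bar>cl b1 + cl b2\<bar> \<le> 2" using cl_props(1)[of b1] cl_props(1)[of b2] by linarith
    ultimately have "\<bar>1 + cl a2\<bar> * (\<bar>cl b1 - cl b2\<bar> * \<bar>cl b1 + cl b2\<bar>) \<le> 2 * (\<bar>b1 - b2\<bar> * 2)"
      using cl_props(3)[of b1 b2] by (intro mult_mono) auto
    then show ?thesis by (simp add: abs_mult)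
  qed
  show ?thesis unfolding e using t1 t2 abs_triangle_ineq by (smt (verit))
qed



locale exi =
  fixes \<Omega> :: "'a::euclidean_space set" and \<gamma>1 \<gamma>2 :: "'a \<Rightarrow> 'a \<Rightarrow> real"
    and d1 d2 f \<kappa> gi :: real
  assumes dom: "open \<Omega>" "\<Omega> \<noteq> {}"
    and pos: "d1 > 0" "d2 > 0" "f > 0" "\<kappa> > 0" and gi: "gi \<ge> 1"
    and gmeas: "\<And>\<gamma>. \<gamma> \<in> {\<gamma>1, \<gamma>2} \<Longrightarrow>
                  (\<lambda>p. \<gamma> (fst p) (snd p)) \<in> borel_measurable (lebesgue_on (\<Omega> \<times> \<Omega>))"
    and gnn: "\<And>\<gamma> x y. \<gamma> \<in> {\<gamma>1, \<gamma>2} \<Longrightarrow> x \<in> \<Omega> \<Longrightarrow> y \<in> \<Omega> \<Longrightarrow> \<gamma> x y \<ge> 0"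
    and gbnd: "\<And>\<gamma> x. \<gamma> \<in> {\<gamma>1, \<gamma>2} \<Longrightarrow> x \<in> \<Omega> \<Longrightarrow>
                 (\<integral>\<^sup>+ y. ennreal (\<gamma> x y) \<partial>lebesgue_on \<Omega>) \<le> ennreal gi"
begin

definition G where
  "G = {x \<in> \<Omega>. (\<lambda>y. \<gamma>1 x y) \<in> borel_measurable (lebesgue_on \<Omega>) \<and> (\<lambda>y. \<gamma>2 x y) \<in> borel_measurable (lebesgue_on \<Omega>)}"

lemma g1m: "(\<lambda>p. \<gamma>1 (fst p) (snd p)) \<in> borel_measurable (lebesgue_on (\<Omega> \<times> \<Omega>))" using gmeas by simp
lemma g2m: "(\<lambda>p. \<gamma>2 (fst p) (snd p)) \<in> borel_measurable (lebesgue_on (\<Omega> \<times> \<Omega>))" using gmeas by simp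

lemma G_AE: "AE x in lebesgue_on \<Omega>. x \<in> G"
proof -
  have "AE x in lebesgue_on \<Omega>. x \<in> \<Omega>" using dom by (metis AE_space space_leb_on)
  then show ?thesis using gamma_fubini(1)[OF dom(1) g1m] gamma_fubini(1)[OF dom(1) g2m]
    unfolding G_def by eventually_elim auto
qed

definition Gm :: "('a \<Rightarrow> 'a \<Rightarrow> real) \<Rightarrow> ('a \<Rightarrow> real) \<Rightarrow> 'a \<Rightarrow> real" where
  "Gm \<gamma> w x = (if x \<in> G \<and> w \<in> borel_measurable (lebesgue_on \<Omega>) then Gam \<Omega> \<gamma> w x else 0)"

definition RHS :: "(('a \<times> bool) discrete \<Rightarrow>\<^sub>C real) \<Rightarrow> 'a \<Rightarrow> bool \<Rightarrow> real" where
  "RHS z x b = (if b then d1 * Gm \<gamma>1 (\<lambda>y. ev z y True) x - f * ev z x True - Nl (ev z x True) (ev z x False)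
     else d2 * Gm \<gamma>2 (\<lambda>y. ev z y False) x - (f + \<kappa>) * ev z x False + Nl (ev z x True) (ev z x False))"

definition FE :: "(('a \<times> bool) discrete \<Rightarrow>\<^sub>C real) \<Rightarrow> (('a \<times> bool) discrete \<Rightarrow>\<^sub>C real)" where
  "FE z = mkE (RHS z)"

definition Lc :: real where "Lc = 2 * gi * (d1 + d2) + f + \<kappa> + 5"

lemma Lc_pos: "Lc > 0" unfolding Lc_def using pos gi by (simp add: add_pos_pos)

lemma gi0: "gi > 0" using gi by simp

lemma Gm_bound:
  assumes g: "\<gamma> \<in> {\<gamma>1, \<gamma>2}" and wb: "\<And>y. \<bar>w y\<bar> \<le> M"
  shows "\<bar>Gm \<gamma> w x\<bar> \<le> 2 * gi * M"
proof (cases "x \<in> G \<and> w \<in> borel_measurable (lebesgue_on \<Omega>)")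
  case True
  then have x: "x \<in> \<Omega>" and gx: "(\<lambda>y. \<gamma> x y) \<in> borel_measurable (lebesgue_on \<Omega>)"
    using g unfolding G_def by auto
  have "\<bar>Gam \<Omega> \<gamma> w x\<bar> \<le> 2 * gi * M"
    by (rule Gam_bound[where x=x and \<gamma>=\<gamma> and \<Omega>=\<Omega> and gi=gi and z=w and M=M])
       (use gx gnn[OF g x] gbnd[OF g x] True wb gi0 in auto)
  then show ?thesis using True unfolding Gm_def by simp
next
  case False
  have "M \<ge> 0" using wb[of x] by linarith
  moreover have "Gm \<gamma> w x = 0" using False unfolding Gm_def by (subst if_not_P) auto
  ultimately show ?thesis using gi0 by simp
qed

lemma RHS_bound: "\<bar>RHS z x b\<bar> \<le> Lc * norm z"
proof -
  have e: "\<And>b. \<bar>ev z x b\<bar> \<le> norm z" by (rule ev_bound)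
  have G1: "\<bar>Gm \<gamma>1 (\<lambda>y. ev z y True) x\<bar> \<le> 2 * gi * norm z" by (rule Gm_bound) (auto intro: ev_bound)
  have G2: "\<bar>Gm \<gamma>2 (\<lambda>y. ev z y False) x\<bar> \<le> 2 * gi * norm z" by (rule Gm_bound) (auto intro: ev_bound)
  have N: "\<bar>Nl (ev z x True) (ev z x False)\<bar> \<le> 2 * norm z" using Nl_bound(1) e[of False] by (meson order_trans mult_left_mono zero_le_numeral)
  have nz: "norm z \<ge> 0" by simp
  show ?thesis
  proof (cases b)
    case True
    have "\<bar>RHS z x b\<bar> \<le> d1 * \<bar>Gm \<gamma>1 (\<lambda>y. ev z y True) x\<bar> + f * \<bar>ev z x True\<bar> + \<bar>Nl (ev z x True) (ev z x False)\<bar>"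
      unfolding RHS_def using True pos by (simp add: abs3)
    also have "\<dots> \<le> d1 * (2 * gi * norm z) + f * norm z + 2 * norm z"
      using G1 e N pos by (intro add_mono mult_left_mono) auto
    also have "\<dots> \<le> Lc * norm z" unfolding Lc_def using nz pos gi0
      by (simp add: algebra_simps mult_nonneg_nonneg)
    finally show ?thesis .
  next
    case False
    have "\<bar>RHS z x b\<bar> \<le> d2 * \<bar>Gm \<gamma>2 (\<lambda>y. ev z y False) x\<bar> + (f + \<kappa>) * \<bar>ev z x False\<bar> + \<bar>Nl (ev z x True) (ev z x False)\<bar>"
      unfolding RHS_def using False pos by (simp add: abs3)
    also have "\<dots> \<le> d2 * (2 * gi * norm z) + (f + \<kappa>) * norm z + 2 * norm z"
      using G2 e N pos by (intro add_mono mult_left_mono) auto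
    also have "\<dots> \<le> Lc * norm z" unfolding Lc_def using nz pos gi0
      by (simp add: algebra_simps mult_nonneg_nonneg)
    finally show ?thesis .
  qed
qed

lemma ev_FE: "ev (FE z) x b = RHS z x b"
  unfolding FE_def by (rule ev_mkE[OF RHS_bound])

lemma Gm_diff:
  assumes g: "\<gamma> \<in> {\<gamma>1, \<gamma>2}"
    and w: "w1 \<in> borel_measurable (lebesgue_on \<Omega>)" "w2 \<in> borel_measurable (lebesgue_on \<Omega>)"
    and wb: "\<And>y. \<bar>w1 y\<bar> \<le> K" "\<And>y. \<bar>w2 y\<bar> \<le> K"
  shows "Gm \<gamma> w1 x - Gm \<gamma> w2 x = Gm \<gamma> (\<lambda>y. w1 y - w2 y) x"
proof (cases "x \<in> G")
  case True
  then have x: "x \<in> \<Omega>" and gx: "(\<lambda>y. \<gamma> x y) \<in> borel_measurable (lebesgue_on \<Omega>)"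
    using g unfolding G_def by auto
  have wd: "(\<lambda>y. w1 y - w2 y) \<in> borel_measurable (lebesgue_on \<Omega>)" using w by measurable
  have "Gam \<Omega> \<gamma> w1 x - Gam \<Omega> \<gamma> w2 x = Gam \<Omega> \<gamma> (\<lambda>y. w1 y - w2 y) x"
    by (rule Gam_diff[where x=x and \<gamma>=\<gamma> and \<Omega>=\<Omega> and gi=gi and ?w1.0=w1 and ?w2.0=w2 and K=K])
       (use gx gnn[OF g x] gbnd[OF g x] w wb in auto)
  then show ?thesis unfolding Gm_def using True w wd by simp
next
  case False then show ?thesis unfolding Gm_def by simp
qed

lemma FE_lip:
  assumes z: "z1 \<in> Mset \<Omega>" "z2 \<in> Mset \<Omega>"
  shows "norm (FE z1 - FE z2) \<le> Lc * norm (z1 - z2)"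
proof (rule norm_ev_le)
  fix x b
  let ?n = "norm (z1 - z2)"
  have wm: "(\<lambda>y. ev z1 y c) \<in> borel_measurable (lebesgue_on \<Omega>)" "(\<lambda>y. ev z2 y c) \<in> borel_measurable (lebesgue_on \<Omega>)" for c
    using z unfolding Mset_def by auto
  have wb: "\<bar>ev z1 y c\<bar> \<le> max (norm z1) (norm z2)" "\<bar>ev z2 y c\<bar> \<le> max (norm z1) (norm z2)" for y c
    using ev_bound[of z1 y c] ev_bound[of z2 y c] by auto
  have dd: "\<bar>ev z1 y c - ev z2 y c\<bar> \<le> ?n" for y c using ev_bound[of "z1 - z2" y c] by simp
  have GD: "\<bar>Gm \<gamma> (\<lambda>y. ev z1 y c) x - Gm \<gamma> (\<lambda>y. ev z2 y c) x\<bar> \<le> 2 * gi * ?n"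
    if g: "\<gamma> \<in> {\<gamma>1, \<gamma>2}" for \<gamma> c
    unfolding Gm_diff[OF g wm(1)[of c] wm(2)[of c] wb(1)[of _ c] wb(2)[of _ c]]
    by (rule Gm_bound[OF g dd])
  have ND: "\<bar>Nl (ev z1 x True) (ev z1 x False) - Nl (ev z2 x True) (ev z2 x False)\<bar> \<le> 5 * ?n"
  proof -
    have a: "\<bar>ev z1 x True - ev z2 x True\<bar> \<le> ?n" by (rule dd)
    have b: "4 * \<bar>ev z1 x False - ev z2 x False\<bar> \<le> 4 * ?n" using dd[of x False] by simp
    show ?thesis using Nl_lip[of "ev z1 x True" "ev z1 x False" "ev z2 x True" "ev z2 x False"] a b
      by linarith
  qed
  have nz: "?n \<ge> 0" by simp
  have "\<bar>RHS z1 x b - RHS z2 x b\<bar> \<le> Lc * ?n"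
  proof (cases b)
    case True
    have "RHS z1 x b - RHS z2 x b = d1 * (Gm \<gamma>1 (\<lambda>y. ev z1 y True) x - Gm \<gamma>1 (\<lambda>y. ev z2 y True) x)
        - f * (ev z1 x True - ev z2 x True)
        - (Nl (ev z1 x True) (ev z1 x False) - Nl (ev z2 x True) (ev z2 x False))"
      unfolding RHS_def using True by (simp add: algebra_simps)
    also have "\<bar>\<dots>\<bar> \<le> d1 * \<bar>Gm \<gamma>1 (\<lambda>y. ev z1 y True) x - Gm \<gamma>1 (\<lambda>y. ev z2 y True) x\<bar>
        + f * \<bar>ev z1 x True - ev z2 x True\<bar>
        + \<bar>Nl (ev z1 x True) (ev z1 x False) - Nl (ev z2 x True) (ev z2 x False)\<bar>"
      using pos by (intro abs3) auto
    also have "\<dots> \<le> d1 * (2 * gi * ?n) + f * ?n + 5 * ?n"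
      using GD[of \<gamma>1 True] dd[of x True] ND pos by (intro add_mono mult_left_mono) auto
    also have "\<dots> \<le> Lc * ?n" unfolding Lc_def using nz pos gi0
      by (simp add: algebra_simps mult_nonneg_nonneg)
    finally show ?thesis .
  next
    case False
    have "RHS z1 x b - RHS z2 x b = d2 * (Gm \<gamma>2 (\<lambda>y. ev z1 y False) x - Gm \<gamma>2 (\<lambda>y. ev z2 y False) x)
        - (f + \<kappa>) * (ev z1 x False - ev z2 x False)
        + (Nl (ev z1 x True) (ev z1 x False) - Nl (ev z2 x True) (ev z2 x False))"
      unfolding RHS_def using False by (simp add: algebra_simps)
    also have "\<bar>\<dots>\<bar> \<le> d2 * \<bar>Gm \<gamma>2 (\<lambda>y. ev z1 y False) x - Gm \<gamma>2 (\<lambda>y. ev z2 y False) x\<bar>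
        + (f + \<kappa>) * \<bar>ev z1 x False - ev z2 x False\<bar>
        + \<bar>Nl (ev z1 x True) (ev z1 x False) - Nl (ev z2 x True) (ev z2 x False)\<bar>"
      using pos by (intro abs3) auto
    also have "\<dots> \<le> d2 * (2 * gi * ?n) + (f + \<kappa>) * ?n + 5 * ?n"
      using GD[of \<gamma>2 False] dd[of x False] ND pos by (intro add_mono mult_left_mono) auto
    also have "\<dots> \<le> Lc * ?n" unfolding Lc_def using nz pos gi0
      by (simp add: algebra_simps mult_nonneg_nonneg)
    finally show ?thesis .
  qed
  then show "\<bar>ev (FE z1 - FE z2) x b\<bar> \<le> Lc * ?n" by (simp add: ev_FE)
qed

lemma Gm_meas:
  assumes g: "\<gamma> \<in> {\<gamma>1, \<gamma>2}" and w: "w \<in> borel_measurable (lebesgue_on \<Omega>)"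
  shows "Gm \<gamma> w \<in> borel_measurable (lebesgue_on \<Omega>)"
proof -
  have gm: "(\<lambda>p. \<gamma> (fst p) (snd p)) \<in> borel_measurable (lebesgue_on (\<Omega> \<times> \<Omega>))" using gmeas[OF g] .
  have "Gam \<Omega> \<gamma> w \<in> borel_measurable (lebesgue_on \<Omega>)" by (rule gamma_fubini(2)[OF dom(1) gm w])
  moreover have "AE x in lebesgue_on \<Omega>. Gam \<Omega> \<gamma> w x = Gm \<gamma> w x"
    using G_AE by eventually_elim (use w in \<open>simp add: Gm_def\<close>)
  ultimately show ?thesis by (rule meas_AE_on[OF dom(1)])
qed

lemma cl_meas[measurable]: "cl \<in> borel_measurable borel"
  unfolding cl_def by measurable

lemma Nl_meas[measurable]: "(\<lambda>p. Nl (fst p) (snd p)) \<in> borel_measurable borel"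
proof -
  have "continuous_on UNIV (\<lambda>p::real \<times> real. Nl (fst p) (snd p))"
    unfolding Nl_def cl_def by (intro continuous_intros)
  then show ?thesis by (rule borel_measurable_continuous_onI)
qed

lemma FE_Mset: assumes z: "z \<in> Mset \<Omega>" shows "FE z \<in> Mset \<Omega>"
proof -
  have wm[measurable]: "(\<lambda>y. ev z y c) \<in> borel_measurable (lebesgue_on \<Omega>)" for c
    using z unfolding Mset_def by auto
  have G1[measurable]: "Gm \<gamma>1 (\<lambda>y. ev z y True) \<in> borel_measurable (lebesgue_on \<Omega>)"
    by (rule Gm_meas) auto
  have G2[measurable]: "Gm \<gamma>2 (\<lambda>y. ev z y False) \<in> borel_measurable (lebesgue_on \<Omega>)"
    by (rule Gm_meas) auto
  have N[measurable]: "(\<lambda>x. Nl (ev z x True) (ev z x False)) \<in> borel_measurable (lebesgue_on \<Omega>)"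
    using measurable_compose[OF measurable_Pair[OF wm[of True] wm[of False]] Nl_meas[unfolded borel_prod[symmetric]]]
    by simp
  show ?thesis unfolding Mset_def
  proof (intro CollectI allI)
    fix b
    show "(\<lambda>x. ev (FE z) x b) \<in> borel_measurable (lebesgue_on \<Omega>)"
      unfolding ev_FE RHS_def by (cases b) simp_all
  qed
qed

end



instance bcontfun :: (metric_space, banach) banach ..

lemma at_Ici: "(0::real) \<le> \<tau> \<Longrightarrow> at \<tau> within {0..} = at \<tau> within {0..\<tau>+1}"
  by (rule at_within_nhd[where S="{\<tau> - 1 <..< \<tau> + 1}"]) auto

lemma int_est:
  fixes g :: "real \<Rightarrow> 'b::banach"
  assumes gc: "continuous_on {0..\<tau>} g" and \<tau>: "\<tau> \<ge> 0" and a: "a > 0" and K: "K \<ge> 0"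
    and gb: "\<And>s. s \<in> {0..\<tau>} \<Longrightarrow> norm (g s) \<le> K * exp (a * s)"
  shows "norm (integral {0..\<tau>} g) \<le> K * (exp (a * \<tau>) - 1) / a"
proof -
  have hi: "((\<lambda>s. K * exp (a * s)) has_integral (K * exp (a * \<tau>) / a - K * exp (a * 0) / a)) {0..\<tau>}"
  proof (rule fundamental_theorem_of_calculus[OF \<tau>])
    fix s assume "s \<in> {0..\<tau>}"
    have "((\<lambda>s. K * exp (a * s) / a) has_real_derivative K * exp (a * s)) (at s within {0..\<tau>})"
      using a by (auto intro!: derivative_eq_intros)
    then show "((\<lambda>s. K * exp (a * s) / a) has_vector_derivative K * exp (a * s)) (at s within {0..\<tau>})"
      by (simp add: has_real_derivative_iff_has_vector_derivative)
  qed
  have "norm (integral {0..\<tau>} g) \<le> integral {0..\<tau>} (\<lambda>s. K * exp (a * s))"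
    by (rule integral_norm_bound_integral[OF integrable_continuous_interval[OF gc] has_integral_integrable[OF hi] gb])
  also have "\<dots> = K * exp (a * \<tau>) / a - K * exp (a * 0) / a" by (rule integral_unique[OF hi])
  also have "\<dots> = K * (exp (a * \<tau>) - 1) / a" using a by (simp add: field_simps)
  finally show ?thesis .
qed

lemma Iint_cont:
  fixes g :: "real \<Rightarrow> 'b::banach"
  assumes "continuous_on UNIV g"
  shows "continuous_on {0..} (\<lambda>\<tau>. integral {0..\<tau>} g)"
  unfolding continuous_on_eq_continuous_within
proof
  fix \<tau> :: real assume "\<tau> \<in> {0..}"
  then have t: "\<tau> \<ge> 0" by simp
  have "continuous_on {0..\<tau>+1} (\<lambda>\<tau>. integral {0..\<tau>} g)"
    by (rule indefinite_integral_continuous_1[OF integrable_continuous_interval[OF continuous_on_subset[OF assms]]]) auto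
  then have "continuous (at \<tau> within {0..\<tau>+1}) (\<lambda>\<tau>. integral {0..\<tau>} g)"
    using t unfolding continuous_on_eq_continuous_within by auto
  then show "continuous (at \<tau> within {0..}) (\<lambda>\<tau>. integral {0..\<tau>} g)"
    using at_Ici[OF t] by (simp add: continuous_within)
qed

context exi begin

lemma FE_norm: "norm (FE z) \<le> Lc * norm z"
  unfolding FE_def by (rule norm_mkE[OF RHS_bound])

lemma FE_cont: "continuous_on (Mset \<Omega>) FE"
  unfolding continuous_on_iff
proof (intro ballI allI impI)
  fix z e assume z: "z \<in> Mset \<Omega>" and e: "(e::real) > 0"
  show "\<exists>d>0. \<forall>z'\<in>Mset \<Omega>. dist z' z < d \<longrightarrow> dist (FE z') (FE z) < e"
  proof (intro exI[of _ "e / Lc"] conjI ballI impI)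
    show "e / Lc > 0" using e Lc_pos by simp
    fix z' assume z': "z' \<in> Mset \<Omega>" and d: "dist z' z < e / Lc"
    have "dist (FE z') (FE z) \<le> Lc * dist z' z" using FE_lip[OF z' z] by (simp add: dist_norm)
    also have "\<dots> < Lc * (e / Lc)" using d Lc_pos by (intro mult_strict_left_mono) auto
    also have "\<dots> = e" using Lc_pos by simp
    finally show "dist (FE z') (FE z) < e" .
  qed
qed

definition aa :: real where "aa = 2 * Lc"

lemma aa_pos: "aa > 0" unfolding aa_def using Lc_pos by simp

definition SC :: "(real \<Rightarrow>\<^sub>C (('a \<times> bool) discrete \<Rightarrow>\<^sub>C real)) set" where
  "SC = PiC UNIV (\<lambda>_. Mset \<Omega>)"

lemma SC_mem: "V \<in> SC \<longleftrightarrow> (\<forall>s. apply_bcontfun V s \<in> Mset \<Omega>)"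
  unfolding SC_def mem_PiC_iff by auto

definition gV where "gV V s = FE (exp (aa * s) *\<^sub>R apply_bcontfun V s)"

definition PV where
  "PV X0 V t = exp (- aa * max 0 t) *\<^sub>R (X0 + integral {0..max 0 t} (gV V))"

lemma hV_cont: "continuous_on A (\<lambda>s. exp (aa * s) *\<^sub>R apply_bcontfun (V :: real \<Rightarrow>\<^sub>C (('a \<times> bool) discrete \<Rightarrow>\<^sub>C real)) s)"
  by (intro continuous_intros) auto

lemma gV_cont: assumes V: "V \<in> SC" shows "continuous_on A (gV V)"
proof -
  have "continuous_on UNIV (\<lambda>s. FE (exp (aa * s) *\<^sub>R apply_bcontfun V s))"
    by (rule continuous_on_compose2[OF FE_cont hV_cont]) (use V in \<open>auto simp: SC_mem intro: Mset_ops\<close>)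
  then show ?thesis unfolding gV_def by (rule continuous_on_subset) simp
qed

lemma gV_Mset: assumes V: "V \<in> SC" shows "gV V s \<in> Mset \<Omega>"
  unfolding gV_def by (rule FE_Mset) (use V in \<open>auto simp: SC_mem intro: Mset_ops\<close>)

lemma gV_bound: "norm (gV V s) \<le> Lc * norm V * exp (aa * s)"
proof -
  have "norm (gV V s) \<le> Lc * norm (exp (aa * s) *\<^sub>R apply_bcontfun V s)" unfolding gV_def by (rule FE_norm)
  also have "\<dots> = Lc * (exp (aa * s) * norm (apply_bcontfun V s))" by simp
  also have "\<dots> \<le> Lc * (exp (aa * s) * norm V)"
    using Lc_pos by (intro mult_left_mono norm_bounded) auto
  finally show ?thesis by (simp add: algebra_simps)
qed

lemma gV_diff: assumes V: "V1 \<in> SC" "V2 \<in> SC"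
  shows "norm (gV V1 s - gV V2 s) \<le> Lc * norm (V1 - V2) * exp (aa * s)"
proof -
  have m: "exp (aa * s) *\<^sub>R apply_bcontfun V1 s \<in> Mset \<Omega>" "exp (aa * s) *\<^sub>R apply_bcontfun V2 s \<in> Mset \<Omega>"
    using V by (auto simp: SC_mem intro: Mset_ops)
  have "norm (gV V1 s - gV V2 s) \<le> Lc * norm (exp (aa * s) *\<^sub>R apply_bcontfun V1 s - exp (aa * s) *\<^sub>R apply_bcontfun V2 s)"
    unfolding gV_def by (rule FE_lip[OF m])
  also have "\<dots> = Lc * (exp (aa * s) * norm (apply_bcontfun (V1 - V2) s))"
    by (simp flip: scaleR_diff_right)
  also have "\<dots> \<le> Lc * (exp (aa * s) * norm (V1 - V2))"
    using Lc_pos by (intro mult_left_mono norm_bounded) auto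
  finally show ?thesis by (simp add: algebra_simps)
qed

lemma Lc_aa: "Lc / aa = 1/2" unfolding aa_def using Lc_pos by simp

lemma PV_cont: assumes V: "V \<in> SC" shows "continuous_on UNIV (PV X0 V)"
proof -
  have c1: "continuous_on UNIV (\<lambda>t. max 0 (t::real))" by (intro continuous_intros)
  have c2: "continuous_on UNIV (\<lambda>t. integral {0..max 0 t} (gV V))"
    by (rule continuous_on_compose2[OF Iint_cont[OF gV_cont[OF V]] c1]) auto
  show ?thesis unfolding PV_def by (intro continuous_intros c2)
qed

lemma int_gV_bound: assumes V: "V \<in> SC" and \<tau>: "\<tau> \<ge> 0"
  shows "norm (integral {0..\<tau>} (gV V)) \<le> Lc * norm V * (exp (aa * \<tau>) - 1) / aa"
  by (rule int_est[OF gV_cont[OF V] \<tau> aa_pos _ gV_bound]) (use Lc_pos in simp)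

lemma PV_bound: assumes V: "V \<in> SC" shows "norm (PV X0 V t) \<le> norm X0 + norm V / 2"
proof -
  define \<tau> where "\<tau> = max 0 t"
  have \<tau>: "\<tau> \<ge> 0" unfolding \<tau>_def by simp
  have e1: "exp (- aa * \<tau>) \<le> 1" using \<tau> aa_pos by simp
  have e2: "exp (- aa * \<tau>) * exp (aa * \<tau>) = 1" by (simp flip: exp_add)
  have "norm (PV X0 V t) = exp (- aa * \<tau>) * norm (X0 + integral {0..\<tau>} (gV V))"
    unfolding PV_def \<tau>_def by simp
  also have "\<dots> \<le> exp (- aa * \<tau>) * (norm X0 + Lc * norm V * (exp (aa * \<tau>) - 1) / aa)"
    using int_gV_bound[OF V \<tau>] norm_triangle_ineq[of X0 "integral {0..\<tau>} (gV V)"]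
    by (intro mult_left_mono) auto
  also have "\<dots> = exp (- aa * \<tau>) * norm X0 + (Lc / aa) * norm V * (1 - exp (- aa * \<tau>))"
    using e2 by (simp add: algebra_simps diff_divide_distrib)
  also have "\<dots> \<le> 1 * norm X0 + (1/2) * norm V * 1"
    unfolding Lc_aa using e1 by (intro add_mono mult_right_mono mult_left_mono) auto
  finally show ?thesis by simp
qed

lemma PV_Mset: assumes V: "V \<in> SC" and X0: "X0 \<in> Mset \<Omega>" shows "PV X0 V t \<in> Mset \<Omega>"
proof -
  define \<tau> where "\<tau> = max 0 t"
  have "((gV V) has_integral integral {0..\<tau>} (gV V)) (cbox 0 \<tau>)"
    using integrable_continuous_interval[OF gV_cont[OF V]] by (simp add: integrable_integral)
  then have "integral {0..\<tau>} (gV V) \<in> Mset \<Omega>"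
    by (rule integral_in_closed_subspace[OF Mset_closed Mset_subspace]) (rule gV_Mset[OF V])
  then show ?thesis unfolding PV_def \<tau>_def[symmetric] using X0 by (intro Mset_ops)
qed

lemma PV_contr: assumes V: "V1 \<in> SC" "V2 \<in> SC"
  shows "norm (PV X0 V1 t - PV X0 V2 t) \<le> norm (V1 - V2) / 2"
proof -
  define \<tau> where "\<tau> = max 0 t"
  have \<tau>: "\<tau> \<ge> 0" unfolding \<tau>_def by simp
  have e2: "exp (- aa * \<tau>) * exp (aa * \<tau>) = 1" by (simp flip: exp_add)
  have i1: "gV V1 integrable_on {0..\<tau>}" "gV V2 integrable_on {0..\<tau>}"
    using integrable_continuous_interval[OF gV_cont[OF V(1)]] integrable_continuous_interval[OF gV_cont[OF V(2)]] by auto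
  have "PV X0 V1 t - PV X0 V2 t = exp (- aa * \<tau>) *\<^sub>R (integral {0..\<tau>} (gV V1) - integral {0..\<tau>} (gV V2))"
    unfolding PV_def \<tau>_def by (simp add: algebra_simps)
  also have "\<dots> = exp (- aa * \<tau>) *\<^sub>R integral {0..\<tau>} (\<lambda>s. gV V1 s - gV V2 s)"
    using integral_diff[OF i1] by simp
  finally have eq: "PV X0 V1 t - PV X0 V2 t = exp (- aa * \<tau>) *\<^sub>R integral {0..\<tau>} (\<lambda>s. gV V1 s - gV V2 s)" .
  have c: "continuous_on {0..\<tau>} (\<lambda>s. gV V1 s - gV V2 s)"
    using gV_cont[OF V(1)] gV_cont[OF V(2)] by (intro continuous_intros)
  have "norm (integral {0..\<tau>} (\<lambda>s. gV V1 s - gV V2 s)) \<le> Lc * norm (V1 - V2) * (exp (aa * \<tau>) - 1) / aa"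
    by (rule int_est[OF c \<tau> aa_pos _ gV_diff[OF V]]) (use Lc_pos in simp)
  then have "norm (PV X0 V1 t - PV X0 V2 t) \<le> exp (- aa * \<tau>) * (Lc * norm (V1 - V2) * (exp (aa * \<tau>) - 1) / aa)"
  proof -
    have "norm (PV X0 V1 t - PV X0 V2 t) = exp (- aa * \<tau>) * norm (integral {0..\<tau>} (\<lambda>s. gV V1 s - gV V2 s))"
      unfolding eq by simp
    also have "\<dots> \<le> exp (- aa * \<tau>) * (Lc * norm (V1 - V2) * (exp (aa * \<tau>) - 1) / aa)"
      using \<open>norm (integral {0..\<tau>} _) \<le> _\<close> by (rule mult_left_mono) simp
    finally show ?thesis .
  qed
  also have "\<dots> = (Lc / aa) * norm (V1 - V2) * (1 - exp (- aa * \<tau>))"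
    using e2 by (simp add: algebra_simps diff_divide_distrib)
  also have "\<dots> \<le> (1/2) * norm (V1 - V2) * 1"
    unfolding Lc_aa using \<tau> aa_pos by (intro mult_left_mono) auto
  finally show ?thesis by simp
qed

lemma PV_bcontfun: assumes V: "V \<in> SC" shows "PV X0 V \<in> bcontfun"
  by (rule bcontfun_normI[OF PV_cont[OF V] PV_bound[OF V]])

definition QV where "QV X0 V = Bcontfun (PV X0 V)"

lemma QV_apply: assumes V: "V \<in> SC" shows "apply_bcontfun (QV X0 V) = PV X0 V"
  unfolding QV_def using PV_bcontfun[OF V] by (simp add: Bcontfun_inverse)

lemma fixpoint: assumes X0: "X0 \<in> Mset \<Omega>" shows "\<exists>V\<in>SC. QV X0 V = V"
proof -
  have "\<exists>!V\<in>SC. QV X0 V = V"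
  proof (rule Banach_fix[where c="1/2"])
    show "complete SC" unfolding SC_def complete_eq_closed by (rule closed_PiC) (rule Mset_closed)
    have "0 \<in> SC" unfolding SC_mem by (simp add: Mset_ops)
    then show "SC \<noteq> {}" by auto
    show "QV X0 ` SC \<subseteq> SC" unfolding SC_mem using QV_apply PV_Mset[OF _ X0]
      by (auto simp: SC_mem)
    fix V1 V2 assume V: "V1 \<in> SC" "V2 \<in> SC"
    show "dist (QV X0 V1) (QV X0 V2) \<le> 1/2 * dist V1 V2"
    proof (rule dist_bound)
      fix t
      show "dist (apply_bcontfun (QV X0 V1) t) (apply_bcontfun (QV X0 V2) t) \<le> 1/2 * dist V1 V2"
        unfolding QV_apply[OF V(1)] QV_apply[OF V(2)] dist_norm using PV_contr[OF V] by simp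
    qed
  qed simp_all
  then show ?thesis by blast
qed

end



lemma vec_deriv_quot:
  fixes Y :: "real \<Rightarrow> 'b::real_normed_vector"
  assumes "(Y has_vector_derivative F) (at t within S)"
  shows "((\<lambda>s. norm ((Y s - Y t) /\<^sub>R (s - t) - F)) \<longlongrightarrow> 0) (at t within S)"
proof -
  have "((\<lambda>y. (1 / norm (y - t)) *\<^sub>R (Y y - (Y t + (y - t) *\<^sub>R F))) \<longlongrightarrow> 0) (at t within S)"
    using assms unfolding has_vector_derivative_def has_derivative_within by simp
  then have l: "((\<lambda>y. norm ((1 / norm (y - t)) *\<^sub>R (Y y - (Y t + (y - t) *\<^sub>R F)))) \<longlongrightarrow> 0) (at t within S)"
    by (rule tendsto_norm_zero)
  have ev: "eventually (\<lambda>s. norm ((1 / norm (s - t)) *\<^sub>R (Y s - (Y t + (s - t) *\<^sub>R F))) =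
      norm ((Y s - Y t) /\<^sub>R (s - t) - F)) (at t within S)"
    unfolding eventually_at_filter
  proof (intro always_eventually allI impI)
    fix s assume "s \<noteq> t"
    then have st: "s - t \<noteq> 0" by simp
    have "(1 / (s - t)) *\<^sub>R (Y s - (Y t + (s - t) *\<^sub>R F)) = (1 / (s - t)) *\<^sub>R (Y s - Y t) - (1 / (s - t)) *\<^sub>R ((s - t) *\<^sub>R F)"
      by (simp add: scaleR_diff_right scaleR_add_right algebra_simps)
    also have "(1 / (s - t)) *\<^sub>R ((s - t) *\<^sub>R F) = F" using st by simp
    also have "(1 / (s - t)) *\<^sub>R (Y s - Y t) = (Y s - Y t) /\<^sub>R (s - t)" by (simp add: divide_inverse)
    finally have "(Y s - Y t) /\<^sub>R (s - t) - F = (1 / (s - t)) *\<^sub>R (Y s - (Y t + (s - t) *\<^sub>R F))" by simp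
    then show "norm ((1 / norm (s - t)) *\<^sub>R (Y s - (Y t + (s - t) *\<^sub>R F))) = norm ((Y s - Y t) /\<^sub>R (s - t) - F)"
      by simp
  qed
  show ?thesis by (rule Lim_transform_eventually[OF l ev])
qed

context exi begin

lemma fix_solution:
  assumes X0: "X0 \<in> Mset \<Omega>" and V: "V \<in> SC" and fx: "QV X0 V = V"
  defines "Y \<equiv> \<lambda>t. exp (aa * t) *\<^sub>R apply_bcontfun V t"
  shows "Y 0 = X0" "\<And>t. Y t \<in> Mset \<Omega>"
    "\<And>t. t \<ge> 0 \<Longrightarrow> ((\<lambda>s. norm ((Y s - Y t) /\<^sub>R (s - t) - FE (Y t))) \<longlongrightarrow> 0) (at t within {0..})"
proof -
  have Vt: "apply_bcontfun V t = PV X0 V t" for t using QV_apply[OF V, of X0] fx by simp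
  have gY: "gV V s = FE (Y s)" for s unfolding gV_def Y_def ..
  have Yeq: "Y t = X0 + integral {0..t} (\<lambda>s. FE (Y s))" if "t \<ge> 0" for t
  proof -
    have "Y t = exp (aa * t) *\<^sub>R (exp (- aa * t) *\<^sub>R (X0 + integral {0..t} (gV V)))"
      unfolding Y_def Vt PV_def using that by simp
    also have "\<dots> = X0 + integral {0..t} (gV V)" by (simp flip: exp_add)
    finally show ?thesis unfolding gY .
  qed
  show "Y 0 = X0" using Yeq[of 0] by simp
  show "Y t \<in> Mset \<Omega>" for t unfolding Y_def using V by (auto simp: SC_mem intro: Mset_ops)
  fix t :: real assume t: "t \<ge> 0"
  have c: "continuous_on {0..t+1} (\<lambda>s. FE (Y s))" using gV_cont[OF V] unfolding gY .
  have "((\<lambda>u. integral {0..u} (\<lambda>s. FE (Y s))) has_vector_derivative FE (Y t)) (at t within {0..t+1})"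
    by (rule integral_has_vector_derivative[OF c]) (use t in simp)
  then have "((\<lambda>u. X0 + integral {0..u} (\<lambda>s. FE (Y s))) has_vector_derivative FE (Y t)) (at t within {0..t+1})"
    by (intro derivative_eq_intros) auto
  then have "((\<lambda>u. X0 + integral {0..u} (\<lambda>s. FE (Y s))) has_vector_derivative FE (Y t)) (at t within {0..})"
    using at_Ici[OF t] by simp
  then have "(Y has_vector_derivative FE (Y t)) (at t within {0..})"
    by (rule has_vector_derivative_transform[rotated 2]) (use t Yeq in auto)
  then show "((\<lambda>s. norm ((Y s - Y t) /\<^sub>R (s - t) - FE (Y t))) \<longlongrightarrow> 0) (at t within {0..})"
    by (rule vec_deriv_quot)
qed

end



lemma ev_divR: "ev (z /\<^sub>R c) x b = ev z x b / c"
  by (simp add: divide_inverse_commute)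

context exi begin

lemma pos0: "emeasure (lebesgue_on \<Omega>) (space (lebesgue_on \<Omega>)) \<noteq> 0"
  using leb_on_pos dom by blast

lemma Mset_meas: "z \<in> Mset \<Omega> \<Longrightarrow> (\<lambda>x. ev z x b) \<in> borel_measurable (lebesgue_on \<Omega>)"
  unfolding Mset_def by auto

lemma linf_ev: "z \<in> Mset \<Omega> \<Longrightarrow> linf \<Omega> (\<lambda>x. ev z x b) \<le> ereal (norm z)"
  by (rule linf_le[OF Mset_meas]) (auto intro: ev_bound)

lemma inX_ev: "z \<in> Mset \<Omega> \<Longrightarrow> inX \<Omega> (\<lambda>x. ev z x b)"
  unfolding inX_def using Mset_meas linf_ev
  by (metis ereal_less_eq(3) infinity_ereal_def less_ereal.simps(4) order_le_less_trans)

lemma linf_tendsto: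
  assumes l: "((\<lambda>s. norm (Err s)) \<longlongrightarrow> 0) F" and m: "\<And>s. Err s \<in> Mset \<Omega>"
  shows "((\<lambda>s. linf \<Omega> (\<lambda>x. ev (Err s) x b)) \<longlongrightarrow> 0) F"
proof (rule tendsto_sandwich[where f="\<lambda>_. 0" and h="\<lambda>s. ereal (norm (Err s))"])
  show "eventually (\<lambda>s. 0 \<le> linf \<Omega> (\<lambda>x. ev (Err s) x b)) F"
    using linf_nonneg[OF pos0] by simp
  show "eventually (\<lambda>s. linf \<Omega> (\<lambda>x. ev (Err s) x b) \<le> ereal (norm (Err s))) F"
    using linf_ev[OF m] by simp
  show "((\<lambda>s. ereal (norm (Err s))) \<longlongrightarrow> 0) F" using tendsto_ereal[OF l] by (simp add: zero_ereal_def)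
qed simp

lemma Y_small:
  assumes X0: "X0 \<in> Mset \<Omega>" and V: "V \<in> SC" and fx: "QV X0 V = V"
    and C: "0 < C" "C < min 1 (f/8)"
      "nrm \<Omega> (\<lambda>x. ev X0 x True) + nrm \<Omega> (\<lambda>x. ev X0 x False) \<le> C"
  defines "Y \<equiv> \<lambda>t. exp (aa * t) *\<^sub>R apply_bcontfun V t"
  shows "\<And>t. t \<ge> 0 \<Longrightarrow> AE x in lebesgue_on \<Omega>. \<bar>ev (Y t) x True\<bar> \<le> 1 \<and> \<bar>ev (Y t) x False\<bar> \<le> 1"
proof -
  have FS1: "Y 0 = X0" and FS2: "\<And>t. Y t \<in> Mset \<Omega>"
    and FS3: "\<And>t. t \<ge> 0 \<Longrightarrow> ((\<lambda>s. norm ((Y s - Y t) /\<^sub>R (s - t) - FE (Y t))) \<longlongrightarrow> 0) (at t within {0..})"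
    using fix_solution[OF X0 V fx] unfolding Y_def by auto
  note FS = FS1 FS2 FS3
  define W' where "W' t x = ev (Y t) x True" for t x
  define V' where "V' t x = ev (Y t) x False" for t x
  have good: "AE x in lebesgue_on \<Omega>. (\<lambda>y. \<gamma>1 x y) \<in> borel_measurable (lebesgue_on \<Omega>) \<and>
                  (\<lambda>y. \<gamma>2 x y) \<in> borel_measurable (lebesgue_on \<Omega>)"
    using G_AE unfolding G_def by eventually_elim auto
  have Wm: "W' t \<in> borel_measurable (lebesgue_on \<Omega>)" "V' t \<in> borel_measurable (lebesgue_on \<Omega>)" for t
    unfolding W'_def V'_def using Mset_meas[OF FS(2)] by auto
  define Err where "Err t s = (Y s - Y t) /\<^sub>R (s - t) - FE (Y t)" for t s
  have ErrM: "Err t s \<in> Mset \<Omega>" for t s unfolding Err_def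
    using FS(2) FE_Mset[OF FS(2)] by (simp add: divide_inverse_commute Mset_ops)
  have dec: "\<forall>t\<in>{0..}. nrm \<Omega> (W' t) + nrm \<Omega> (V' t) \<le> C * exp (- (f/4) * t)"
  proof (rule stab_generic[where \<Omega>=\<Omega> and ?\<gamma>1.0=\<gamma>1 and ?\<gamma>2.0=\<gamma>2 and ?d1.0=d1 and ?d2.0=d2 and f=f
        and \<kappa>=\<kappa> and gi=gi and J="{0..}" and W=W' and V=V' and C=C and
        ?R1.0 = "\<lambda>t x. ev (FE (Y t)) x True" and ?R2.0 = "\<lambda>t x. ev (FE (Y t)) x False" and
        ?n1.0 = "\<lambda>t x. Nl (W' t x) (V' t x)" and ?n2.0 = "\<lambda>t x. Nl (W' t x) (V' t x)"])
    show "inX \<Omega> (W' t) \<and> inX \<Omega> (V' t)" for t unfolding W'_def V'_def using inX_ev[OF FS(2)] by auto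
    show "((\<lambda>s. linf \<Omega> (\<lambda>x. (W' s x - W' t x) / (s - t) - ev (FE (Y t)) x True)) \<longlongrightarrow> 0) (at t within {0..})"
      if "t \<in> {0..}" for t
    proof -
      have l: "((\<lambda>s. norm (Err t s)) \<longlongrightarrow> 0) (at t within {0..})" using FS3[of t] that unfolding Err_def by simp
      have "((\<lambda>s. linf \<Omega> (\<lambda>x. ev (Err t s) x True)) \<longlongrightarrow> 0) (at t within {0..})" by (rule linf_tendsto[OF l ErrM])
      then show ?thesis unfolding Err_def W'_def by (simp add: divide_inverse mult.commute)
    qed
    show "((\<lambda>s. linf \<Omega> (\<lambda>x. (V' s x - V' t x) / (s - t) - ev (FE (Y t)) x False)) \<longlongrightarrow> 0) (at t within {0..})"
      if "t \<in> {0..}" for t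
    proof -
      have l: "((\<lambda>s. norm (Err t s)) \<longlongrightarrow> 0) (at t within {0..})" using FS3[of t] that unfolding Err_def by simp
      have "((\<lambda>s. linf \<Omega> (\<lambda>x. ev (Err t s) x False)) \<longlongrightarrow> 0) (at t within {0..})" by (rule linf_tendsto[OF l ErrM])
      then show ?thesis unfolding Err_def V'_def by (simp add: divide_inverse mult.commute)
    qed
    show "AE x in lebesgue_on \<Omega>. ev (FE (Y t)) x True = d1 * Gam \<Omega> \<gamma>1 (W' t) x - f * W' t x - Nl (W' t x) (V' t x)" for t
      using G_AE by eventually_elim (simp add: ev_FE RHS_def Gm_def W'_def[abs_def] V'_def[abs_def] Mset_meas[OF FS2])
    show "AE x in lebesgue_on \<Omega>. ev (FE (Y t)) x False = d2 * Gam \<Omega> \<gamma>2 (V' t) x - (f + \<kappa>) * V' t x + Nl (W' t x) (V' t x)" for t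
      using G_AE by eventually_elim (simp add: ev_FE RHS_def Gm_def W'_def[abs_def] V'_def[abs_def] Mset_meas[OF FS2])
    show "AE x in lebesgue_on \<Omega>. \<bar>Nl (W' t x) (V' t x)\<bar> \<le> (1 + \<bar>W' t x\<bar>) * (V' t x)\<^sup>2 \<and>
        \<bar>Nl (W' t x) (V' t x)\<bar> \<le> (1 + \<bar>W' t x\<bar>) * (V' t x)\<^sup>2" for t
      using Nl_bound(2) by simp
    show "nrm \<Omega> (W' 0) + nrm \<Omega> (V' 0) \<le> C" using C(3) FS(1) unfolding W'_def V'_def by simp
  qed (use dom pos gi good gnn gbnd C in auto)
  fix t :: real assume t: "t \<ge> 0"
  have "C * exp (- (f/4) * t) \<le> C" using C t pos by (simp add: mult_left_le)
  moreover have "nrm \<Omega> (W' t) + nrm \<Omega> (V' t) \<le> C * exp (- (f/4) * t)" using dec t by auto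
  moreover have "C < 1" using C by simp
  ultimately have s: "nrm \<Omega> (W' t) + nrm \<Omega> (V' t) < 1" by linarith
  have X: "inX \<Omega> (W' t)" "inX \<Omega> (V' t)" unfolding W'_def V'_def using inX_ev[OF FS(2)] by auto
  show "AE x in lebesgue_on \<Omega>. \<bar>ev (Y t) x True\<bar> \<le> 1 \<and> \<bar>ev (Y t) x False\<bar> \<le> 1"
  proof -
    have n: "nrm \<Omega> (W' t) \<ge> 0" "nrm \<Omega> (V' t) \<ge> 0" using inX_nrm(2)[OF X(1) pos0] inX_nrm(2)[OF X(2) pos0] by auto
    show ?thesis using inX_nrm(3)[OF X(1) pos0] inX_nrm(3)[OF X(2) pos0]
      by eventually_elim (use n s in \<open>auto simp: W'_def V'_def\<close>)
  qed
qed

end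



lemma Gam_cong_AE:
  assumes g: "(\<lambda>y. \<gamma> x y) \<in> borel_measurable (lebesgue_on \<Omega>)"
    and z: "z1 \<in> borel_measurable (lebesgue_on \<Omega>)" "z2 \<in> borel_measurable (lebesgue_on \<Omega>)"
    and ae: "AE y in lebesgue_on \<Omega>. z1 y = z2 y" and zx: "z1 x = z2 x"
  shows "Gam \<Omega> \<gamma> z1 x = Gam \<Omega> \<gamma> z2 x"
  unfolding Gam_def
proof (rule integral_cong_AE)
  show "(\<lambda>y. \<gamma> x y * (z1 y - z1 x)) \<in> borel_measurable (lebesgue_on \<Omega>)" using g z by measurable
  show "(\<lambda>y. \<gamma> x y * (z2 y - z2 x)) \<in> borel_measurable (lebesgue_on \<Omega>)" using g z by measurable
  show "AE y in lebesgue_on \<Omega>. \<gamma> x y * (z1 y - z1 x) = \<gamma> x y * (z2 y - z2 x)"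
    using ae by eventually_elim (use zx in simp)
qed

definition clampn :: "real \<Rightarrow> real \<Rightarrow> real" where "clampn n s = max (- n) (min n s)"

lemma clampn_props: "n \<ge> 0 \<Longrightarrow> \<bar>clampn n s\<bar> \<le> n" "\<bar>s\<bar> \<le> n \<Longrightarrow> clampn n s = s"
  unfolding clampn_def by auto

lemma clampn_meas[measurable]: "(\<lambda>s. clampn n s) \<in> borel_measurable borel"
  unfolding clampn_def by measurable

context exi begin

lemma linf_tendsto2:
  assumes l: "((\<lambda>s. norm (Err s)) \<longlongrightarrow> 0) F" and b: "\<And>s. linf \<Omega> (h s) \<le> ereal (norm (Err s))"
  shows "((\<lambda>s. linf \<Omega> (h s)) \<longlongrightarrow> 0) F"
proof (rule tendsto_sandwich[where f="\<lambda>_. 0" and h="\<lambda>s. ereal (norm (Err s))"])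
  show "eventually (\<lambda>s. 0 \<le> linf \<Omega> (h s)) F" using linf_nonneg[OF pos0] by simp
  show "eventually (\<lambda>s. linf \<Omega> (h s) \<le> ereal (norm (Err s))) F" using b by simp
  show "((\<lambda>s. ereal (norm (Err s))) \<longlongrightarrow> 0) F" using tendsto_ereal[OF l] by (simp add: zero_ereal_def)
qed simp

lemma exist_sol:
  assumes u0: "inX \<Omega> u0" and v0: "inX \<Omega> v0" and d: "dist10 \<Omega> u0 v0 < ereal (min 1 (f/8) / 2)"
  shows "\<exists>U V. is_sol \<Omega> d1 d2 f \<kappa> \<gamma>1 \<gamma>2 {0..} U V \<and> U 0 = u0 \<and> V 0 = v0"
proof -
  define \<rho> where "\<rho> = min 1 (f/8)"
  have \<rho>: "\<rho> > 0" unfolding \<rho>_def using pos by simp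
  have u1: "inX \<Omega> (\<lambda>x. u0 x - 1)" by (rule inX_shift[OF u0 dom])
  define n1 where "n1 = nrm \<Omega> (\<lambda>x. u0 x - 1)"
  define n2 where "n2 = nrm \<Omega> v0"
  have n0: "n1 \<ge> 0" "n2 \<ge> 0" unfolding n1_def n2_def using inX_nrm(2)[OF u1 pos0] inX_nrm(2)[OF v0 pos0] by auto
  have nAE: "AE x in lebesgue_on \<Omega>. \<bar>u0 x - 1\<bar> \<le> n1 \<and> \<bar>v0 x\<bar> \<le> n2"
    using inX_nrm(3)[OF u1 pos0] inX_nrm(3)[OF v0 pos0] unfolding n1_def n2_def by eventually_elim auto
  have "dist10 \<Omega> u0 v0 = ereal (n1 + n2)"
    unfolding dist10_def n1_def n2_def using inX_nrm(1)[OF u1 pos0] inX_nrm(1)[OF v0 pos0] by simp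
  then have n12: "n1 + n2 < \<rho>/2" using d unfolding \<rho>_def by simp
  define g where "g x b = (if b then clampn n1 (u0 x - 1) else clampn n2 (v0 x))" for x b
  have gb: "\<bar>g x b\<bar> \<le> n1 + n2" for x b
  proof -
    have "\<bar>clampn n1 (u0 x - 1)\<bar> \<le> n1" "\<bar>clampn n2 (v0 x)\<bar> \<le> n2"
      using clampn_props(1)[OF n0(1)] clampn_props(1)[OF n0(2)] by auto
    then show ?thesis unfolding g_def using n0 by (cases b) auto
  qed
  define X0 where "X0 = mkE g"
  have evX0: "ev X0 x b = g x b" for x b unfolding X0_def by (rule ev_mkE[OF gb])
  have um: "u0 \<in> borel_measurable (lebesgue_on \<Omega>)" "v0 \<in> borel_measurable (lebesgue_on \<Omega>)"
    using u0 v0 unfolding inX_def by auto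
  have X0M: "X0 \<in> Mset \<Omega>" unfolding Mset_def
  proof (intro CollectI allI)
    fix b show "(\<lambda>x. ev X0 x b) \<in> borel_measurable (lebesgue_on \<Omega>)"
      unfolding evX0 g_def using um by (cases b) simp_all
  qed
  have nX0: "nrm \<Omega> (\<lambda>x. ev X0 x True) + nrm \<Omega> (\<lambda>x. ev X0 x False) \<le> \<rho>/2"
  proof -
    have "nrm \<Omega> (\<lambda>x. ev X0 x True) \<le> n1"
      by (rule nrm_le[OF inX_ev[OF X0M] pos0]) (auto simp: evX0 g_def intro: clampn_props(1)[OF n0(1)])
    moreover have "nrm \<Omega> (\<lambda>x. ev X0 x False) \<le> n2"
      by (rule nrm_le[OF inX_ev[OF X0M] pos0]) (auto simp: evX0 g_def intro: clampn_props(1)[OF n0(2)])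
    ultimately show ?thesis using n12 by linarith
  qed
  obtain V where V: "V \<in> SC" "QV X0 V = V" using fixpoint[OF X0M] by blast
  define Y where "Y t = exp (aa * t) *\<^sub>R apply_bcontfun V t" for t
  have FS1: "Y 0 = X0" and FS2: "\<And>t. Y t \<in> Mset \<Omega>"
    and FS3: "\<And>t. t \<ge> 0 \<Longrightarrow> ((\<lambda>s. norm ((Y s - Y t) /\<^sub>R (s - t) - FE (Y t))) \<longlongrightarrow> 0) (at t within {0..})"
    using fix_solution[OF X0M V] unfolding Y_def[abs_def] by auto
  have small: "\<And>t. t \<ge> 0 \<Longrightarrow> AE x in lebesgue_on \<Omega>. \<bar>ev (Y t) x True\<bar> \<le> 1 \<and> \<bar>ev (Y t) x False\<bar> \<le> 1"
  proof -
    have cc: "0 < \<rho>/2" "\<rho>/2 < min 1 (f/8)" using \<rho> unfolding \<rho>_def by auto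
    fix t :: real assume t: "t \<ge> 0"
    show "AE x in lebesgue_on \<Omega>. \<bar>ev (Y t) x True\<bar> \<le> 1 \<and> \<bar>ev (Y t) x False\<bar> \<le> 1"
      using Y_small[OF X0M V(1) V(2) cc nX0 t] unfolding Y_def .
  qed
  define c1 where "c1 x = u0 x - 1 - ev X0 x True" for x
  define c2 where "c2 x = v0 x - ev X0 x False" for x
  have cm: "c1 \<in> borel_measurable (lebesgue_on \<Omega>)" "c2 \<in> borel_measurable (lebesgue_on \<Omega>)"
    unfolding c1_def c2_def using um Mset_meas[OF X0M] by measurable
  have c0: "AE x in lebesgue_on \<Omega>. c1 x = 0 \<and> c2 x = 0"
    using nAE by eventually_elim (auto simp: c1_def c2_def evX0 g_def clampn_props(2))
  define U where "U t x = ev (Y t) x True + 1 + c1 x" for t x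
  define W where "W t x = ev (Y t) x False + c2 x" for t x
  have U0: "U 0 = u0" unfolding U_def FS1 c1_def by auto
  have W0: "W 0 = v0" unfolding W_def FS1 c2_def by auto
  have Ym: "(\<lambda>x. ev (Y t) x b) \<in> borel_measurable (lebesgue_on \<Omega>)" for t b using Mset_meas[OF FS2] .
  have Um: "U t \<in> borel_measurable (lebesgue_on \<Omega>)" "W t \<in> borel_measurable (lebesgue_on \<Omega>)" for t
    unfolding U_def[abs_def] W_def[abs_def] using Ym cm by measurable
  have XU: "inX \<Omega> (U t) \<and> inX \<Omega> (W t)" for t
  proof -
    have "linf \<Omega> (U t) \<le> ereal (norm (Y t) + 1)"
    proof (rule linf_le[OF Um(1)])
      show "AE x in lebesgue_on \<Omega>. \<bar>U t x\<bar> \<le> norm (Y t) + 1"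
        using c0
      proof eventually_elim
        case (elim x)
        have "\<bar>ev (Y t) x True\<bar> \<le> norm (Y t)" by (rule ev_bound)
        then show ?case using elim unfolding U_def by linarith
      qed
    qed
    moreover have "linf \<Omega> (W t) \<le> ereal (norm (Y t))"
      by (rule linf_le[OF Um(2)]) (use c0 in \<open>eventually_elim, auto simp: W_def intro: ev_bound\<close>)
    ultimately show ?thesis unfolding inX_def using Um
      by (metis ereal_less_eq(3) infinity_ereal_def less_ereal.simps(4) order_le_less_trans)
  qed
  have "is_sol \<Omega> d1 d2 f \<kappa> \<gamma>1 \<gamma>2 {0..} U W"
    unfolding is_sol_def
  proof (intro conjI ballI)
    show "(0::real) \<in> {0..}" by simp
    show "inX \<Omega> (U t)" "inX \<Omega> (W t)" for t using XU by auto
    fix t :: real assume "t \<in> {0..}"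
    then have t: "t \<ge> 0" by simp
    define Err where "Err s = (Y s - Y t) /\<^sub>R (s - t) - FE (Y t)" for s
    have ErrM: "Err s \<in> Mset \<Omega>" for s unfolding Err_def
      using FS2 FE_Mset[OF FS2] by (simp add: divide_inverse_commute Mset_ops)
    have l: "((\<lambda>s. norm (Err s)) \<longlongrightarrow> 0) (at t within {0..})" using FS3[OF t] unfolding Err_def .
    have evErr: "ev (Err s) x b = (ev (Y s) x b - ev (Y t) x b) / (s - t) - ev (FE (Y t)) x b" for s x b
      unfolding Err_def by (simp add: divide_inverse mult.commute)
    define w where "w x = ev (Y t) x True" for x
    define v where "v x = ev (Y t) x False" for x
    have GU: "Gam \<Omega> \<gamma>1 (U t) x = Gam \<Omega> \<gamma>1 w x" if x: "x \<in> G" "c1 x = 0" for x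
    proof -
      have gx: "(\<lambda>y. \<gamma>1 x y) \<in> borel_measurable (lebesgue_on \<Omega>)" using x unfolding G_def by auto
      have wm: "(\<lambda>y. w y + 1) \<in> borel_measurable (lebesgue_on \<Omega>)" unfolding w_def using Ym by measurable
      have "Gam \<Omega> \<gamma>1 (U t) x = Gam \<Omega> \<gamma>1 (\<lambda>y. w y + 1) x"
      proof (rule Gam_cong_AE[where x=x and \<gamma>=\<gamma>1 and \<Omega>=\<Omega> and ?z1.0="U t" and ?z2.0="\<lambda>y. w y + 1", OF gx Um(1) wm])
        show "AE y in lebesgue_on \<Omega>. U t y = w y + 1" using c0 by eventually_elim (auto simp: U_def w_def)
        show "U t x = w x + 1" using x by (simp add: U_def w_def)
      qed
      also have "\<dots> = Gam \<Omega> \<gamma>1 w x" unfolding Gam_def by simp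
      finally show ?thesis .
    qed
    have GW: "Gam \<Omega> \<gamma>2 (W t) x = Gam \<Omega> \<gamma>2 v x" if x: "x \<in> G" "c2 x = 0" for x
    proof -
      have gx: "(\<lambda>y. \<gamma>2 x y) \<in> borel_measurable (lebesgue_on \<Omega>)" using x unfolding G_def by auto
      have vm: "v \<in> borel_measurable (lebesgue_on \<Omega>)" unfolding v_def using Ym by measurable
      show ?thesis
      proof (rule Gam_cong_AE[where x=x and \<gamma>=\<gamma>2 and \<Omega>=\<Omega> and ?z1.0="W t" and ?z2.0="v", OF gx Um(2) vm])
        show "AE y in lebesgue_on \<Omega>. W t y = v y" using c0 by eventually_elim (auto simp: W_def v_def)
        show "W t x = v x" using x by (simp add: W_def v_def)
      qed
    qed
    have wm': "w \<in> borel_measurable (lebesgue_on \<Omega>)" "v \<in> borel_measurable (lebesgue_on \<Omega>)"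
      unfolding w_def[abs_def] v_def[abs_def] using Ym by auto
    have AEgood: "AE x in lebesgue_on \<Omega>. x \<in> G \<and> c1 x = 0 \<and> c2 x = 0 \<and> \<bar>w x\<bar> \<le> 1 \<and> \<bar>v x\<bar> \<le> 1"
      using G_AE c0 small[OF t] by eventually_elim (auto simp: w_def v_def)
    have FEt: "ev (FE (Y t)) x True = d1 * Gam \<Omega> \<gamma>1 w x - f * w x - (1 + w x) * (v x)\<^sup>2"
      "ev (FE (Y t)) x False = d2 * Gam \<Omega> \<gamma>2 v x - (f + \<kappa>) * v x + (1 + w x) * (v x)\<^sup>2"
      if x: "x \<in> G" "\<bar>w x\<bar> \<le> 1" "\<bar>v x\<bar> \<le> 1" for x
      using x wm' by (simp_all add: ev_FE RHS_def Gm_def Nl_def cl_props(4) w_def[symmetric] v_def[symmetric]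
          flip: w_def[abs_def] v_def[abs_def])
    show "((\<lambda>s. linf \<Omega> (\<lambda>x. (U s x - U t x) / (s - t) -
                 (d1 * Gam \<Omega> \<gamma>1 (U t) x - U t x * (W t x)\<^sup>2 + f * (1 - U t x)))) \<longlongrightarrow> 0) (at t within {0..})"
    proof (rule linf_tendsto2[OF l])
      fix s
      have ae: "AE x in lebesgue_on \<Omega>. (U s x - U t x) / (s - t) -
                 (d1 * Gam \<Omega> \<gamma>1 (U t) x - U t x * (W t x)\<^sup>2 + f * (1 - U t x)) = ev (Err s) x True"
        using AEgood
      proof eventually_elim
        case (elim x)
        then show ?case using GU[of x] FEt(1)[of x] unfolding evErr
          by (simp add: U_def W_def w_def v_def algebra_simps)
      qed
      have m: "(\<lambda>x. (U s x - U t x) / (s - t) -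
                 (d1 * Gam \<Omega> \<gamma>1 (U t) x - U t x * (W t x)\<^sup>2 + f * (1 - U t x))) \<in> borel_measurable (lebesgue_on \<Omega>)"
        by (rule meas_AE_on[OF dom(1) Mset_meas[OF ErrM]]) (use ae in \<open>eventually_elim, simp\<close>)
      show "linf \<Omega> (\<lambda>x. (U s x - U t x) / (s - t) -
                 (d1 * Gam \<Omega> \<gamma>1 (U t) x - U t x * (W t x)\<^sup>2 + f * (1 - U t x))) \<le> ereal (norm (Err s))"
        by (rule linf_le[OF m]) (use ae in \<open>eventually_elim, auto intro: ev_bound\<close>)
    qed
    show "((\<lambda>s. linf \<Omega> (\<lambda>x. (W s x - W t x) / (s - t) -
                 (d2 * Gam \<Omega> \<gamma>2 (W t) x + U t x * (W t x)\<^sup>2 - (f + \<kappa>) * W t x))) \<longlongrightarrow> 0) (at t within {0..})"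
    proof (rule linf_tendsto2[OF l])
      fix s
      have ae: "AE x in lebesgue_on \<Omega>. (W s x - W t x) / (s - t) -
                 (d2 * Gam \<Omega> \<gamma>2 (W t) x + U t x * (W t x)\<^sup>2 - (f + \<kappa>) * W t x) = ev (Err s) x False"
        using AEgood
      proof eventually_elim
        case (elim x)
        then show ?case using GW[of x] FEt(2)[of x] unfolding evErr
          by (simp add: U_def W_def w_def v_def algebra_simps)
      qed
      have m: "(\<lambda>x. (W s x - W t x) / (s - t) -
                 (d2 * Gam \<Omega> \<gamma>2 (W t) x + U t x * (W t x)\<^sup>2 - (f + \<kappa>) * W t x)) \<in> borel_measurable (lebesgue_on \<Omega>)"
        by (rule meas_AE_on[OF dom(1) Mset_meas[OF ErrM]]) (use ae in \<open>eventually_elim, simp\<close>)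
      show "linf \<Omega> (\<lambda>x. (W s x - W t x) / (s - t) -
                 (d2 * Gam \<Omega> \<gamma>2 (W t) x + U t x * (W t x)\<^sup>2 - (f + \<kappa>) * W t x)) \<le> ereal (norm (Err s))"
        by (rule linf_le[OF m]) (use ae in \<open>eventually_elim, auto intro: ev_bound\<close>)
    qed
  qed
  then show ?thesis using U0 W0 by blast
qed

end



lemma existence:
  fixes \<Omega> :: "'a::euclidean_space set"
    and d1 d2 f \<kappa> \<gamma>inf :: real
    and \<gamma>1 \<gamma>2 :: "'a \<Rightarrow> 'a \<Rightarrow> real"
  assumes dom: "open \<Omega>" "\<Omega> \<noteq> {}"
    and pos: "d1 > 0" "d2 > 0" "f > 0" "\<kappa> > 0"
    and ginf: "\<gamma>inf \<ge> 1"
    and gmeas: "\<And>\<gamma>. \<gamma> \<in> {\<gamma>1, \<gamma>2} \<Longrightarrow>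
                  (\<lambda>p. \<gamma> (fst p) (snd p)) \<in> borel_measurable (lebesgue_on (\<Omega> \<times> \<Omega>))"
    and gnn: "\<And>\<gamma> x y. \<gamma> \<in> {\<gamma>1, \<gamma>2} \<Longrightarrow> x \<in> \<Omega> \<Longrightarrow> y \<in> \<Omega> \<Longrightarrow> \<gamma> x y \<ge> 0"
    and gbnd: "\<And>\<gamma> x. \<gamma> \<in> {\<gamma>1, \<gamma>2} \<Longrightarrow> x \<in> \<Omega> \<Longrightarrow>
                 (\<integral>\<^sup>+ y. ennreal (\<gamma> x y) \<partial>lebesgue_on \<Omega>) \<le> ennreal \<gamma>inf"
    and u0: "inX \<Omega> u0" "inX \<Omega> v0" "dist10 \<Omega> u0 v0 < ereal (min 1 (f/8) / 2)"
  shows "\<exists>U V. is_sol \<Omega> d1 d2 f \<kappa> \<gamma>1 \<gamma>2 {0..} U V \<and> U 0 = u0 \<and> V 0 = v0"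
proof -
  interpret exi \<Omega> \<gamma>1 \<gamma>2 d1 d2 f \<kappa> \<gamma>inf
    by (rule exi.intro) (fact dom pos ginf gmeas gnn gbnd)+
  show ?thesis by (rule exist_sol[OF u0])
qed

lemma exp_decay_lim: "c > 0 \<Longrightarrow> ((\<lambda>t::real. C * exp (- c * t)) \<longlongrightarrow> 0) at_top"
proof -
  assume c: "c > 0"
  have "filterlim (\<lambda>t::real. - c * t) at_bot at_top"
    by (rule filterlim_tendsto_neg_mult_at_bot[OF tendsto_const _ filterlim_ident]) (use c in simp)
  then have "((\<lambda>t::real. exp (- c * t)) \<longlongrightarrow> 0) at_top"
    using filterlim_compose[OF exp_at_bot] by blast
  then show ?thesis using tendsto_mult_right_zero by blast
qed

theorem proposition3p1:
  fixes \<Omega> :: "'a::euclidean_space set"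
    and d1 d2 f \<kappa> \<gamma>inf :: real
    and \<gamma>1 \<gamma>2 :: "'a \<Rightarrow> 'a \<Rightarrow> real"
  assumes dom: "open \<Omega>" "connected \<Omega>" "bounded \<Omega>" "\<Omega> \<noteq> {}"
    and pos: "d1 > 0" "d2 > 0" "f > 0" "\<kappa> > 0"
    and ginf: "\<gamma>inf \<ge> 1"
    and gmeas: "\<And>\<gamma>. \<gamma> \<in> {\<gamma>1, \<gamma>2} \<Longrightarrow>
                  (\<lambda>p. \<gamma> (fst p) (snd p)) \<in> borel_measurable (lebesgue_on (\<Omega> \<times> \<Omega>))"
    and gnn: "\<And>\<gamma> x y. \<gamma> \<in> {\<gamma>1, \<gamma>2} \<Longrightarrow> x \<in> \<Omega> \<Longrightarrow> y \<in> \<Omega> \<Longrightarrow> \<gamma> x y \<ge> 0"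
    and gsym: "\<And>\<gamma> x. \<gamma> \<in> {\<gamma>1, \<gamma>2} \<Longrightarrow> x \<in> \<Omega> \<Longrightarrow>
                 (\<integral>\<^sup>+ y. ennreal (\<gamma> y x) \<partial>lebesgue_on \<Omega>) = (\<integral>\<^sup>+ y. ennreal (\<gamma> x y) \<partial>lebesgue_on \<Omega>)"
    and gbnd: "\<And>\<gamma> x. \<gamma> \<in> {\<gamma>1, \<gamma>2} \<Longrightarrow> x \<in> \<Omega> \<Longrightarrow>
                 (\<integral>\<^sup>+ y. ennreal (\<gamma> x y) \<partial>lebesgue_on \<Omega>) \<le> ennreal \<gamma>inf"
  shows
    \<comment> \<open>Lyapunov stability\<close>
    "(\<forall>\<epsilon>>0. \<exists>\<delta>>0. \<forall>J\<in>time_intervals. \<forall>U V.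
        is_sol \<Omega> d1 d2 f \<kappa> \<gamma>1 \<gamma>2 J U V \<and> dist10 \<Omega> (U 0) (V 0) < ereal \<delta>
        \<longrightarrow> (\<forall>t\<in>J. dist10 \<Omega> (U t) (V t) < ereal \<epsilon>))
     \<and>
     \<comment> \<open>local attractivity, with global existence of solutions\<close>
     (\<exists>\<eta>>0. \<forall>u0 v0. inX \<Omega> u0 \<and> inX \<Omega> v0 \<and> dist10 \<Omega> u0 v0 < ereal \<eta> \<longrightarrow>
        (\<exists>U V. is_sol \<Omega> d1 d2 f \<kappa> \<gamma>1 \<gamma>2 {0..} U V \<and> U 0 = u0 \<and> V 0 = v0) \<and>
        (\<forall>U V. is_sol \<Omega> d1 d2 f \<kappa> \<gamma>1 \<gamma>2 {0..} U V \<and> U 0 = u0 \<and> V 0 = v0 \<longrightarrow>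
           ((\<lambda>t. dist10 \<Omega> (U t) (V t)) \<longlongrightarrow> 0) at_top))"
proof
  define \<rho> where "\<rho> = min 1 (f/8)"
  have \<rho>: "\<rho> > 0" unfolding \<rho>_def using pos by simp
  have dec: "\<And>J U V C. J \<in> time_intervals \<Longrightarrow> is_sol \<Omega> d1 d2 f \<kappa> \<gamma>1 \<gamma>2 J U V \<Longrightarrow>
      0 < C \<Longrightarrow> C < min 1 (f/8) \<Longrightarrow> dist10 \<Omega> (U 0) (V 0) \<le> ereal C \<Longrightarrow>
      \<forall>t\<in>J. dist10 \<Omega> (U t) (V t) = ereal (nrm \<Omega> (\<lambda>x. U t x - 1) + nrm \<Omega> (V t)) \<and>
      0 \<le> nrm \<Omega> (\<lambda>x. U t x - 1) + nrm \<Omega> (V t) \<and>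
      nrm \<Omega> (\<lambda>x. U t x - 1) + nrm \<Omega> (V t) \<le> C * exp (- (f/4) * t)"
    by (rule sol_decay[where \<Omega>=\<Omega> and ?d1.0=d1 and ?d2.0=d2 and f=f and \<kappa>=\<kappa> and \<gamma>inf=\<gamma>inf and ?\<gamma>1.0=\<gamma>1 and ?\<gamma>2.0=\<gamma>2]) (rule dom(1) dom(4) pos ginf | rule gmeas gnn gbnd, assumption+ | assumption)+
  show "\<forall>\<epsilon>>0. \<exists>\<delta>>0. \<forall>J\<in>time_intervals. \<forall>U V.
        is_sol \<Omega> d1 d2 f \<kappa> \<gamma>1 \<gamma>2 J U V \<and> dist10 \<Omega> (U 0) (V 0) < ereal \<delta>
        \<longrightarrow> (\<forall>t\<in>J. dist10 \<Omega> (U t) (V t) < ereal \<epsilon>)"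
  proof (intro allI impI)
    fix \<epsilon> :: real assume e: "\<epsilon> > 0"
    define \<delta> where "\<delta> = min \<epsilon> \<rho> / 3"
    have d: "\<delta> > 0" "2 * \<delta> < \<rho>" "2 * \<delta> < \<epsilon>" unfolding \<delta>_def using e \<rho> by auto
    show "\<exists>\<delta>>0. \<forall>J\<in>time_intervals. \<forall>U V.
        is_sol \<Omega> d1 d2 f \<kappa> \<gamma>1 \<gamma>2 J U V \<and> dist10 \<Omega> (U 0) (V 0) < ereal \<delta>
        \<longrightarrow> (\<forall>t\<in>J. dist10 \<Omega> (U t) (V t) < ereal \<epsilon>)"
    proof (intro exI[of _ \<delta>] conjI ballI allI impI)
      show "\<delta> > 0" by (rule d(1))
      fix J U V t assume J: "J \<in> time_intervals"
        and sol: "is_sol \<Omega> d1 d2 f \<kappa> \<gamma>1 \<gamma>2 J U V \<and> dist10 \<Omega> (U 0) (V 0) < ereal \<delta>"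
        and t: "t \<in> J"
      have "dist10 \<Omega> (U 0) (V 0) \<le> ereal (2 * \<delta>)" using sol d by (meson ereal_less_eq(3) less_eq_ereal_def
          less_le_trans linorder_not_le mult_le_cancel_right1 one_le_numeral)
      then have D: "\<forall>t\<in>J. dist10 \<Omega> (U t) (V t) = ereal (nrm \<Omega> (\<lambda>x. U t x - 1) + nrm \<Omega> (V t)) \<and>
          0 \<le> nrm \<Omega> (\<lambda>x. U t x - 1) + nrm \<Omega> (V t) \<and>
          nrm \<Omega> (\<lambda>x. U t x - 1) + nrm \<Omega> (V t) \<le> (2 * \<delta>) * exp (- (f/4) * t)"
        using dec[OF J, of U V "2 * \<delta>"] sol d \<rho>_def by auto
      have "t \<ge> 0" using time_intervals_props(2)[OF J t] .
      then have "exp (- (f/4) * t) \<le> 1" using pos by simp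
      then have "(2 * \<delta>) * exp (- (f/4) * t) \<le> 2 * \<delta>" using d by (simp add: mult_left_le)
      moreover have "dist10 \<Omega> (U t) (V t) = ereal (nrm \<Omega> (\<lambda>x. U t x - 1) + nrm \<Omega> (V t))"
        "nrm \<Omega> (\<lambda>x. U t x - 1) + nrm \<Omega> (V t) \<le> (2 * \<delta>) * exp (- (f/4) * t)"
        using D t by auto
      ultimately have "nrm \<Omega> (\<lambda>x. U t x - 1) + nrm \<Omega> (V t) < \<epsilon>" using d by linarith
      then show "dist10 \<Omega> (U t) (V t) < ereal \<epsilon>"
        using \<open>dist10 \<Omega> (U t) (V t) = _\<close> by simp
    qed
  qed
  show "\<exists>\<eta>>0. \<forall>u0 v0. inX \<Omega> u0 \<and> inX \<Omega> v0 \<and> dist10 \<Omega> u0 v0 < ereal \<eta> \<longrightarrow>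
        (\<exists>U V. is_sol \<Omega> d1 d2 f \<kappa> \<gamma>1 \<gamma>2 {0..} U V \<and> U 0 = u0 \<and> V 0 = v0) \<and>
        (\<forall>U V. is_sol \<Omega> d1 d2 f \<kappa> \<gamma>1 \<gamma>2 {0..} U V \<and> U 0 = u0 \<and> V 0 = v0 \<longrightarrow>
           ((\<lambda>t. dist10 \<Omega> (U t) (V t)) \<longlongrightarrow> 0) at_top)"
  proof (intro exI[of _ "\<rho>/2"] conjI allI impI)
    show "\<rho>/2 > 0" using \<rho> by simp
    fix u0 v0 assume uv: "inX \<Omega> u0 \<and> inX \<Omega> v0 \<and> dist10 \<Omega> u0 v0 < ereal (\<rho>/2)"
    show "\<exists>U V. is_sol \<Omega> d1 d2 f \<kappa> \<gamma>1 \<gamma>2 {0..} U V \<and> U 0 = u0 \<and> V 0 = v0"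
      by (rule existence[where \<Omega>=\<Omega> and ?d1.0=d1 and ?d2.0=d2 and f=f and \<kappa>=\<kappa> and \<gamma>inf=\<gamma>inf and ?\<gamma>1.0=\<gamma>1 and ?\<gamma>2.0=\<gamma>2]) (rule dom(1) dom(4) pos ginf | rule gmeas gnn gbnd, assumption+ | use uv in \<open>auto simp: \<rho>_def\<close>)+
    fix U V assume sol: "is_sol \<Omega> d1 d2 f \<kappa> \<gamma>1 \<gamma>2 {0..} U V \<and> U 0 = u0 \<and> V 0 = v0"
    have J: "{0..} \<in> time_intervals" unfolding time_intervals_def by simp
    have D: "\<forall>t\<in>{0..}. dist10 \<Omega> (U t) (V t) = ereal (nrm \<Omega> (\<lambda>x. U t x - 1) + nrm \<Omega> (V t)) \<and>
          0 \<le> nrm \<Omega> (\<lambda>x. U t x - 1) + nrm \<Omega> (V t) \<and>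
          nrm \<Omega> (\<lambda>x. U t x - 1) + nrm \<Omega> (V t) \<le> (\<rho>/2) * exp (- (f/4) * t)"
    proof -
      have sol': "is_sol \<Omega> d1 d2 f \<kappa> \<gamma>1 \<gamma>2 {0..} U V" using sol by simp
      have c1: "0 < \<rho>/2" "\<rho>/2 < min 1 (f/8)" using \<rho> \<rho>_def by auto
      have c2: "dist10 \<Omega> (U 0) (V 0) \<le> ereal (\<rho>/2)" using sol uv by (auto simp: less_imp_le)
      show ?thesis using dec[OF J sol' c1 c2] .
    qed
    define \<phi> where "\<phi> t = nrm \<Omega> (\<lambda>x. U t x - 1) + nrm \<Omega> (V t)" for t
    have "(\<phi> \<longlongrightarrow> 0) at_top"
    proof (rule tendsto_sandwich[OF _ _ tendsto_const exp_decay_lim[of "f/4" "\<rho>/2"]])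
      show "eventually (\<lambda>t. 0 \<le> \<phi> t) at_top" using D unfolding \<phi>_def
        by (intro eventually_at_top_linorderI[of 0]) auto
      show "eventually (\<lambda>t. \<phi> t \<le> (\<rho>/2) * exp (- (f/4) * t)) at_top" using D unfolding \<phi>_def
        by (intro eventually_at_top_linorderI[of 0]) auto
    qed (use pos in simp)
    then have lim: "((\<lambda>t. ereal (\<phi> t)) \<longlongrightarrow> ereal 0) at_top" by (rule tendsto_ereal)
    have ev: "eventually (\<lambda>t. ereal (\<phi> t) = dist10 \<Omega> (U t) (V t)) at_top"
      using D unfolding \<phi>_def by (intro eventually_at_top_linorderI[of 0]) auto
    show "((\<lambda>t. dist10 \<Omega> (U t) (V t)) \<longlongrightarrow> 0) at_top"
      using Lim_transform_eventually[OF lim ev] by (simp add: zero_ereal_def)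
  qed
qed



end
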